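(* Let $p\ge 3$ be an integer and let $\lambda\ge 0$. For each $n\ge 1$, let $\theta_0\in\mathbb S^{n-1}$, let $Z$ be a random $p$-tensor in $(\mathbb R^n)^{\otimes p}$ with i.i.d. $\mathcal N(0,1)$ entries, and set $Y=\lambda\sqrt n\,\theta_0^{\otimes p}+Z$. Let $\Pi$ be the uniform probability measure on $\mathbb S^{n-1}$ and let the posterior be $d\Pi(\theta\mid Y)=\mathcal Z_Y^{-1}\exp\big(\tfrac12\sqrt n\lambda\langle\theta^{\otimes p},Y\rangle\big)\,d\Pi(\theta)$ with $\mathcal Z_Y$ the normalising constant. For $0\le s<t\le 1$ define the sets $\mathcal S_s$ and $\mathcal T_t$ as in the context. Then for any $K>0$ there exist $\lambda_0>0$ and functions $s(\lambda),t(\lambda)\in[0,1)$ with $s(\lambda)<t(\lambda)$ and $s(\lambda),t(\lambda)\to 1$ as $\lambda\to\infty$, such that for all $\lambda\ge\lambda_0$, \[\limsup_{n\to\infty}\frac1n\log\frac{\Pi(\mathcal S_{s(\lambda)}\mid Y)}{\Pi(\mathcal T_{t(\lambda)}\mid Y)}\le -K\quad\text{almost surely.}\]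
   Context: $\mathbb S^{n-1}=\{\theta\in\mathbb R^n:\|\theta\|_2=1\}$; $\theta^{\otimes p}$ is the $p$-fold tensor product and $\langle\cdot,\cdot\rangle$ the Euclidean inner product on $\mathbb R^{n^p}$. If $p$ is even: $\mathcal S_s=\{\theta\in\mathbb S^{n-1}:|\langle\theta,\theta_0\rangle|\le s\}$ and $\mathcal T_t=\{\theta\in\mathbb S^{n-1}:|\langle\theta,\theta_0\rangle|>t\}$. If $p$ is odd, the same definitions with $|\langle\theta,\theta_0\rangle|$ replaced by $\langle\theta,\theta_0\rangle$. *)

theory Defs
  imports "HOL-Probability.Probability"
begin

text \<open>Vectors in R^n are represented as extensional functions nat => real on the
  index set {..<n} (elements of PiE {..<n} (%_. UNIV)); the ambient measurable space
  is the product Borel space PiM {..<n} (%_. lborel).\<close>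

definition Rn :: "nat \<Rightarrow> (nat \<Rightarrow> real) measure" where
  "Rn n = PiM {..<n} (\<lambda>_. lborel)"

definition inner_n :: "nat \<Rightarrow> (nat \<Rightarrow> real) \<Rightarrow> (nat \<Rightarrow> real) \<Rightarrow> real" where
  "inner_n n x y = (\<Sum>i<n. x i * y i)"

definition sphere_n :: "nat \<Rightarrow> (nat \<Rightarrow> real) set" where
  "sphere_n n = {\<theta> \<in> PiE {..<n} (\<lambda>_. UNIV). inner_n n \<theta> \<theta> = 1}"

definition ball_n :: "nat \<Rightarrow> (nat \<Rightarrow> real) set" where
  "ball_n n = {x \<in> PiE {..<n} (\<lambda>_. UNIV). inner_n n x x \<le> 1}"

text \<open>Uniform (normalised surface) probability measure on S^{n-1}, defined as the
  cone measure: Pi(A) = vol{r x : 0 < r <= 1, x in A} / vol(unit ball), i.e. the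
  push-forward of the uniform distribution on the unit ball under x |-> x/|x|.\<close>
definition unif_sphere :: "nat \<Rightarrow> (nat \<Rightarrow> real) measure" where
  "unif_sphere n = distr (uniform_measure (Rn n) (ball_n n)) (Rn n)
      (\<lambda>x. restrict (\<lambda>i. x i / sqrt (inner_n n x x)) {..<n})"

text \<open>Index set of entries of a p-tensor in (R^n)^{\<otimes>p}: multi-indices (i_1,...,i_p)
  with i_j < n, represented as lists of length p.\<close>
definition tidx :: "nat \<Rightarrow> nat \<Rightarrow> nat list set" where
  "tidx p n = {i. length i = p \<and> (\<forall>j\<in>set i. j < n)}"

definition tpow :: "nat \<Rightarrow> (nat \<Rightarrow> real) \<Rightarrow> nat list \<Rightarrow> real" where
  "tpow p \<theta> i = (\<Prod>j<p. \<theta> (i ! j))"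

definition tinner :: "nat \<Rightarrow> nat \<Rightarrow> (nat list \<Rightarrow> real) \<Rightarrow> (nat list \<Rightarrow> real) \<Rightarrow> real" where
  "tinner p n A B = (\<Sum>i\<in>tidx p n. A i * B i)"

definition obsY :: "nat \<Rightarrow> nat \<Rightarrow> real \<Rightarrow> (nat \<Rightarrow> real) \<Rightarrow> (nat list \<Rightarrow> real) \<Rightarrow> nat list \<Rightarrow> real" where
  "obsY p n lam \<theta>0 Z i = lam * sqrt (real n) * tpow p \<theta>0 i + Z i"

definition posterior :: "nat \<Rightarrow> nat \<Rightarrow> real \<Rightarrow> (nat list \<Rightarrow> real) \<Rightarrow> (nat \<Rightarrow> real) set \<Rightarrow> real" where
  "posterior p n lam Y A =
     (LINT \<theta>:A|unif_sphere n. exp (1/2 * sqrt (real n) * lam * tinner p n (tpow p \<theta>) Y)) /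
     (LINT \<theta>|unif_sphere n. exp (1/2 * sqrt (real n) * lam * tinner p n (tpow p \<theta>) Y))"

definition overlap :: "nat \<Rightarrow> nat \<Rightarrow> (nat \<Rightarrow> real) \<Rightarrow> (nat \<Rightarrow> real) \<Rightarrow> real" where
  "overlap p n \<theta>0 \<theta> = (if even p then \<bar>inner_n n \<theta> \<theta>0\<bar> else inner_n n \<theta> \<theta>0)"

definition setS :: "nat \<Rightarrow> nat \<Rightarrow> (nat \<Rightarrow> real) \<Rightarrow> real \<Rightarrow> (nat \<Rightarrow> real) set" where
  "setS p n \<theta>0 s = {\<theta> \<in> sphere_n n. overlap p n \<theta>0 \<theta> \<le> s}"

definition setT :: "nat \<Rightarrow> nat \<Rightarrow> (nat \<Rightarrow> real) \<Rightarrow> real \<Rightarrow> (nat \<Rightarrow> real) set" where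
  "setT p n \<theta>0 t = {\<theta> \<in> sphere_n n. overlap p n \<theta>0 \<theta> > t}"

end

theory Submission
  imports Defs "HOL-Real_Asymp.Real_Asymp"
begin

lemma tidx_0: "tidx 0 n = {[]}" by (auto simp: tidx_def)

lemma tidx_Suc: "tidx (Suc p) n = (\<lambda>(k,i). k # i) ` ({..<n} \<times> tidx p n)"
  apply (auto simp: tidx_def length_Suc_conv image_iff)
  done

lemma finite_tidx: "finite (tidx p n)"
  by (induction p) (auto simp: tidx_0 tidx_Suc)

lemma sum_prod_tidx:
  "(\<Sum>i\<in>tidx p n. \<Prod>j<p. f j (i!j)) = (\<Prod>j<p. \<Sum>k<n. (f j k :: real))"
proof (induction p arbitrary: f)
  case 0 then show ?case by (simp add: tidx_0)
next
  case (Suc p)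
  have inj: "inj_on (\<lambda>(k,i). k # i) ({..<n} \<times> tidx p n)" by (auto simp: inj_on_def)
  have "(\<Sum>i\<in>tidx (Suc p) n. \<Prod>j<Suc p. f j (i!j))
      = (\<Sum>(k,i)\<in>{..<n} \<times> tidx p n. f 0 k * (\<Prod>j<p. f (Suc j) (i!j)))"
    unfolding tidx_Suc by (subst sum.reindex[OF inj]) (auto simp del: prod.lessThan_Suc simp add: prod.lessThan_Suc_shift intro!: sum.cong)
  also have "\<dots> = (\<Sum>k<n. f 0 k) * (\<Sum>i\<in>tidx p n. \<Prod>j<p. f (Suc j) (i!j))"
    by (simp add: sum.cartesian_product[symmetric] sum_product)
  also have "\<dots> = (\<Sum>k<n. f 0 k) * (\<Prod>j<p. \<Sum>k<n. f (Suc j) k)" using Suc[of "\<lambda>j. f (Suc j)"] by simp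
  also have "\<dots> = (\<Prod>j<Suc p. \<Sum>k<n. f j k)" by (simp del: prod.lessThan_Suc add: prod.lessThan_Suc_shift)
  finally show ?case .
qed

definition mlf :: "nat \<Rightarrow> nat \<Rightarrow> (nat list \<Rightarrow> real) \<Rightarrow> (nat \<Rightarrow> nat \<Rightarrow> real) \<Rightarrow> real" where
  "mlf p n Zt w = (\<Sum>i\<in>tidx p n. Zt i * (\<Prod>j<p. w j (i!j)))"

definition nrm :: "nat \<Rightarrow> (nat \<Rightarrow> real) \<Rightarrow> real" where
  "nrm n x = sqrt (inner_n n x x)"

lemma tidx_lt: "i \<in> tidx p n \<Longrightarrow> j < p \<Longrightarrow> i ! j < n"
  by (auto simp: tidx_def)

lemma tinner_tpow_tpow: "tinner p n (tpow p \<theta>) (tpow p \<theta>0) = (inner_n n \<theta> \<theta>0)^p"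
proof -
  have "tinner p n (tpow p \<theta>) (tpow p \<theta>0) = (\<Sum>i\<in>tidx p n. \<Prod>j<p. (\<lambda>j k. \<theta> k * \<theta>0 k) j (i!j))"
    by (simp add: tinner_def tpow_def prod.distrib)
  also have "\<dots> = (\<Prod>j<p. \<Sum>k<n. \<theta> k * \<theta>0 k)" by (rule sum_prod_tidx)
  finally show ?thesis by (simp add: inner_n_def)
qed

lemma tinner_obs: "tinner p n (tpow p \<theta>) (obsY p n lam \<theta>0 Zt)
   = lam * sqrt (real n) * (inner_n n \<theta> \<theta>0)^p + mlf p n Zt (\<lambda>_. \<theta>)"
proof -
  have "tinner p n (tpow p \<theta>) (obsY p n lam \<theta>0 Zt) =
     lam * sqrt (real n) * tinner p n (tpow p \<theta>) (tpow p \<theta>0) + tinner p n (tpow p \<theta>) Zt"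
    by (simp add: tinner_def obsY_def algebra_simps sum.distrib sum_distrib_left)
  moreover have "tinner p n (tpow p \<theta>) Zt = mlf p n Zt (\<lambda>_. \<theta>)"
    by (simp add: tinner_def tpow_def mlf_def mult.commute)
  ultimately show ?thesis by (simp only: tinner_tpow_tpow)
qed

lemma inner_n_nonneg: "0 \<le> inner_n n x x"
  by (auto simp: inner_n_def intro!: sum_nonneg)

lemma sum_sq_tidx: "(\<Sum>i\<in>tidx p n. (\<Prod>j<p. w j (i!j))\<^sup>2) = (\<Prod>j<p. inner_n n (w j) (w j))"
proof -
  have "(\<Sum>i\<in>tidx p n. (\<Prod>j<p. w j (i!j))\<^sup>2) = (\<Sum>i\<in>tidx p n. \<Prod>j<p. (\<lambda>j k. w j k * w j k) j (i!j))"
    by (simp add: power2_eq_square prod.distrib)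
  also have "\<dots> = (\<Prod>j<p. \<Sum>k<n. w j k * w j k)" by (rule sum_prod_tidx)
  finally show ?thesis by (simp add: inner_n_def)
qed

lemma sqrt_prod_lessThan: "sqrt (\<Prod>j<(p::nat). f j) = (\<Prod>j<p. sqrt (f j))"
  by (induction p) (simp_all add: real_sqrt_mult)

lemma mlf_CS: "\<bar>mlf p n Zt w\<bar> \<le> sqrt (\<Sum>i\<in>tidx p n. (Zt i)\<^sup>2) * (\<Prod>j<p. nrm n (w j))"
proof -
  have "(mlf p n Zt w)\<^sup>2 \<le> (\<Sum>i\<in>tidx p n. (Zt i)\<^sup>2) * (\<Sum>i\<in>tidx p n. (\<Prod>j<p. w j (i!j))\<^sup>2)"
    unfolding mlf_def by (rule Cauchy_Schwarz_ineq_sum)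
  also have "\<dots> = (\<Sum>i\<in>tidx p n. (Zt i)\<^sup>2) * (\<Prod>j<p. inner_n n (w j) (w j))"
    by (simp add: sum_sq_tidx)
  finally have "sqrt ((mlf p n Zt w)\<^sup>2) \<le> sqrt ((\<Sum>i\<in>tidx p n. (Zt i)\<^sup>2) * (\<Prod>j<p. inner_n n (w j) (w j)))"
    by (rule real_sqrt_le_mono)
  then show ?thesis
    by (simp add: real_sqrt_mult nrm_def sqrt_prod_lessThan)
qed

lemma mlf_cong: "(\<And>j i. j < p \<Longrightarrow> i < n \<Longrightarrow> w j i = w' j i) \<Longrightarrow> mlf p n Zt w = mlf p n Zt w'"
  unfolding mlf_def by (intro sum.cong refl arg_cong2[where f="(*)"] prod.cong) (auto dest: tidx_lt)

lemma mlf_scale: "mlf p n Zt (\<lambda>j i. c j * w j i) = (\<Prod>j<p. c j) * mlf p n Zt w"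
  unfolding mlf_def by (simp add: prod.distrib sum_distrib_left algebra_simps)

lemma prod_telescope:
  fixes a b :: "nat \<Rightarrow> real"
  shows "(\<Prod>j<p. a j) - (\<Prod>j<p. b j) =
    (\<Sum>k<p. \<Prod>j<p. (if j < k then b j else if j = k then a j - b j else a j))"
proof (induction p)
  case 0 then show ?case by simp
next
  case (Suc p)
  have e1: "(\<Prod>j<Suc p. (if j < k then b j else if j = k then a j - b j else a j))
     = (\<Prod>j<p. (if j < k then b j else if j = k then a j - b j else a j)) * a p" if "k < p" for k
    using that by simp
  have e2: "(\<Prod>j<p. (if j < p then b j else if j = p then a j - b j else a j)) = (\<Prod>j<p. b j)"
    by (rule prod.cong) auto
  have "(\<Prod>j<Suc p. a j) - (\<Prod>j<Suc p. b j) = ((\<Prod>j<p. a j) - (\<Prod>j<p. b j)) * a p + (\<Prod>j<p. b j) * (a p - b p)"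
    by (simp add: algebra_simps)
  also have "\<dots> = (\<Sum>k<p. (\<Prod>j<Suc p. (if j < k then b j else if j = k then a j - b j else a j)))
       + (\<Prod>j<Suc p. (if j < p then b j else if j = p then a j - b j else a j))"
    by (simp add: Suc e1 sum_distrib_right e2)
  also have "\<dots> = (\<Sum>k<Suc p. (\<Prod>j<Suc p. (if j < k then b j else if j = k then a j - b j else a j)))"
    by (simp only: sum.lessThan_Suc)
  finally show ?case .
qed

definition sph :: "nat \<Rightarrow> nat \<Rightarrow> (nat \<Rightarrow> nat \<Rightarrow> real) set" where
  "sph p n = {u. \<forall>j<p. u j \<in> sphere_n n}"

definition Lsup :: "nat \<Rightarrow> nat \<Rightarrow> (nat list \<Rightarrow> real) \<Rightarrow> real" where
  "Lsup p n Zt = Sup ((\<lambda>u. \<bar>mlf p n Zt u\<bar>) ` sph p n)"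

definition e0 :: "nat \<Rightarrow> nat \<Rightarrow> real" where
  "e0 n = restrict (\<lambda>i. if i = 0 then 1 else 0) {..<n}"

lemma inner_n_restrict1[simp]: "inner_n n (restrict f {..<n}) g = inner_n n f g"
  by (simp add: inner_n_def)
lemma inner_n_restrict2[simp]: "inner_n n f (restrict g {..<n}) = inner_n n f g"
  by (simp add: inner_n_def)

lemma e0_sphere: "n \<ge> 1 \<Longrightarrow> e0 n \<in> sphere_n n"
proof -
  assume n: "n \<ge> 1"
  have "inner_n n (\<lambda>i. if i = 0 then 1 else 0) (\<lambda>i. if i = 0 then 1 else 0) = 1"
    using n by (simp add: inner_n_def if_distrib cong: if_cong)
  then show ?thesis by (simp add: sphere_n_def e0_def)
qed

lemma sph_nonempty: "n \<ge> 1 \<Longrightarrow> (\<lambda>_. e0 n) \<in> sph p n"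
  by (simp add: sph_def e0_sphere)

lemma nrm_sphere: "u \<in> sphere_n n \<Longrightarrow> nrm n u = 1"
  by (simp add: sphere_n_def nrm_def)

lemma Lsup_bdd: "bdd_above ((\<lambda>u. \<bar>mlf p n Zt u\<bar>) ` sph p n)"
proof (rule bdd_aboveI2)
  fix u assume "u \<in> sph p n"
  then have "(\<Prod>j<p. nrm n (u j)) = 1" by (simp add: sph_def nrm_sphere)
  then show "\<bar>mlf p n Zt u\<bar> \<le> sqrt (\<Sum>i\<in>tidx p n. (Zt i)\<^sup>2)"
    using mlf_CS[of p n Zt u] by simp
qed

lemma mlf_le_Lsup: "u \<in> sph p n \<Longrightarrow> \<bar>mlf p n Zt u\<bar> \<le> Lsup p n Zt"
  unfolding Lsup_def by (rule cSup_upper) (auto intro: Lsup_bdd)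

lemma Lsup_nonneg: "n \<ge> 1 \<Longrightarrow> 0 \<le> Lsup p n Zt"
  using mlf_le_Lsup[OF sph_nonempty, of n p Zt] by linarith

lemma Lsup_least: "n \<ge> 1 \<Longrightarrow> (\<And>u. u \<in> sph p n \<Longrightarrow> \<bar>mlf p n Zt u\<bar> \<le> B) \<Longrightarrow> Lsup p n Zt \<le> B"
  unfolding Lsup_def by (rule cSup_least) (use sph_nonempty in auto)

lemma nrm_nonneg: "0 \<le> nrm n x" by (simp add: nrm_def inner_n_nonneg)

lemma nrm_zero: "nrm n x = 0 \<Longrightarrow> i < n \<Longrightarrow> x i = 0"
proof -
  assume "nrm n x = 0" "i < n"
  then have "(\<Sum>i<n. x i * x i) = 0" by (simp add: nrm_def inner_n_def)
  then have "\<forall>i\<in>{..<n}. x i * x i = 0" by (subst (asm) sum_nonneg_eq_0_iff) auto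
  then show ?thesis using \<open>i < n\<close> by auto
qed

lemma mlf_bound:
  assumes n: "n \<ge> 1"
  shows "\<bar>mlf p n Zt w\<bar> \<le> Lsup p n Zt * (\<Prod>j<p. nrm n (w j))"
proof (cases "\<exists>j<p. nrm n (w j) = 0")
  case True
  then obtain j where j: "j < p" "nrm n (w j) = 0" by auto
  have "mlf p n Zt w = 0"
    unfolding mlf_def
  proof (intro sum.neutral ballI)
    fix i assume "i \<in> tidx p n"
    then have "w j (i!j) = 0" using j by (intro nrm_zero tidx_lt) auto
    then show "Zt i * (\<Prod>j<p. w j (i ! j)) = 0" using j by (auto simp: prod_zero_iff)
  qed
  then show ?thesis using Lsup_nonneg[OF n] by (simp add: prod_nonneg nrm_nonneg)
next
  case False
  define u where "u j = restrict (\<lambda>i. w j i / nrm n (w j)) {..<n}" for j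
  have "u \<in> sph p n"
  proof -
    { fix j assume j: "j < p"
      then have pos: "nrm n (w j) > 0" using False nrm_nonneg[of n "w j"] by force
      have "inner_n n (\<lambda>i. w j i / nrm n (w j)) (\<lambda>i. w j i / nrm n (w j)) = inner_n n (w j) (w j) / (nrm n (w j))^2"
        by (simp add: inner_n_def power2_eq_square sum_divide_distrib)
      also have "\<dots> = 1" using pos by (simp add: nrm_def inner_n_nonneg)
      finally have "u j \<in> sphere_n n" by (simp add: u_def sphere_n_def) }
    then show ?thesis by (simp add: sph_def)
  qed
  have "mlf p n Zt w = mlf p n Zt (\<lambda>j i. nrm n (w j) * u j i)"
    using False by (intro mlf_cong) (auto simp: u_def)
  also have "\<dots> = (\<Prod>j<p. nrm n (w j)) * mlf p n Zt u" by (rule mlf_scale)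
  finally show ?thesis
    using mlf_le_Lsup[OF \<open>u \<in> sph p n\<close>, of Zt]
    by (simp add: abs_mult prod_nonneg nrm_nonneg abs_prod mult_right_mono mult.commute)
qed

definition hyb :: "(nat \<Rightarrow> nat \<Rightarrow> real) \<Rightarrow> (nat \<Rightarrow> nat \<Rightarrow> real) \<Rightarrow> nat \<Rightarrow> nat \<Rightarrow> nat \<Rightarrow> real" where
  "hyb u v k j x = (if j < k then v j x else if j = k then u j x - v j x else u j x)"

lemma hyb_eq: "hyb u v k j = (if j < k then v j else if j = k then (\<lambda>x. u j x - v j x) else u j)"
  by (auto simp: hyb_def fun_eq_iff)

lemma mlf_diff: "mlf p n Zt u - mlf p n Zt v = (\<Sum>k<p. mlf p n Zt (hyb u v k))"
proof -
  have "mlf p n Zt u - mlf p n Zt v = (\<Sum>i\<in>tidx p n. Zt i * ((\<Prod>j<p. u j (i!j)) - (\<Prod>j<p. v j (i!j))))"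
    by (simp add: mlf_def algebra_simps sum_subtractf)
  also have "\<dots> = (\<Sum>i\<in>tidx p n. \<Sum>k<p. Zt i * (\<Prod>j<p. hyb u v k j (i!j)))"
  proof (rule sum.cong[OF refl])
    fix i
    have "(\<Prod>j<p. u j (i!j)) - (\<Prod>j<p. v j (i!j)) = (\<Sum>k<p. \<Prod>j<p. hyb u v k j (i!j))"
      by (simp only: prod_telescope hyb_def)
    then show "Zt i * ((\<Prod>j<p. u j (i!j)) - (\<Prod>j<p. v j (i!j))) = (\<Sum>k<p. Zt i * (\<Prod>j<p. hyb u v k j (i!j)))"
      by (simp add: sum_distrib_left)
  qed
  also have "\<dots> = (\<Sum>k<p. mlf p n Zt (hyb u v k))"
    by (subst sum.swap) (simp add: mlf_def)
  finally show ?thesis .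
qed

lemma inner_n_diff: "inner_n n (\<lambda>i. u i - v i) (\<lambda>i. u i - v i) = inner_n n u u - 2 * inner_n n u v + inner_n n v v"
proof -
  have "\<And>i. (u i - v i) * (u i - v i) = u i * u i - 2 * (u i * v i) + v i * v i" by algebra
  then show ?thesis by (simp add: inner_n_def sum.distrib sum_subtractf sum_distrib_left)
qed

lemma inner_n_sym: "inner_n n u v = inner_n n v u"
  by (simp add: inner_n_def mult.commute)

lemma mlf_lip:
  assumes n: "n \<ge> 1" and u: "u \<in> sph p n" and v: "v \<in> sph p n"
  shows "\<bar>mlf p n Zt u - mlf p n Zt v\<bar> \<le> Lsup p n Zt * (\<Sum>k<p. nrm n (\<lambda>i. u k i - v k i))"
proof -
  have "\<bar>mlf p n Zt (hyb u v k)\<bar> \<le> Lsup p n Zt * nrm n (\<lambda>i. u k i - v k i)" if k: "k < p" for k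
  proof -
    have "(\<Prod>j<p. nrm n (hyb u v k j)) = (\<Prod>j<p. if j = k then nrm n (\<lambda>i. u k i - v k i) else 1)"
      using u v by (intro prod.cong refl) (auto simp: hyb_eq sph_def nrm_sphere)
    also have "\<dots> = nrm n (\<lambda>i. u k i - v k i)" using k by (simp add: prod.delta)
    finally show ?thesis using mlf_bound[OF n, of p Zt "hyb u v k"] by simp
  qed
  then have "(\<Sum>k<p. \<bar>mlf p n Zt (hyb u v k)\<bar>) \<le> (\<Sum>k<p. Lsup p n Zt * nrm n (\<lambda>i. u k i - v k i))"
    by (intro sum_mono) auto
  then show ?thesis unfolding mlf_diff sum_distrib_left[symmetric]
    using sum_abs[of "\<lambda>k. mlf p n Zt (hyb u v k)" "{..<p}"] by linarith
qed

lemma nrm_diff_sphere: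
  assumes "u \<in> sphere_n n" "v \<in> sphere_n n"
  shows "(nrm n (\<lambda>i. u i - v i))^2 = 2 - 2 * inner_n n u v"
proof -
  have "(nrm n (\<lambda>i. u i - v i))^2 = inner_n n (\<lambda>i. u i - v i) (\<lambda>i. u i - v i)"
    by (simp add: nrm_def inner_n_nonneg)
  also have "\<dots> = 2 - 2 * inner_n n u v"
    using assms by (simp add: inner_n_diff sphere_n_def inner_n_sym[of n v u])
  finally show ?thesis .
qed

definition nz :: "nat \<Rightarrow> (nat \<Rightarrow> real) \<Rightarrow> (nat \<Rightarrow> real)" where
  "nz n x = restrict (\<lambda>i. x i / sqrt (inner_n n x x)) {..<n}"

lemma unif_sphere_nz: "unif_sphere n = distr (uniform_measure (Rn n) (ball_n n)) (Rn n) (nz n)"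
  by (simp add: unif_sphere_def nz_def[abs_def])

lemma space_Rn: "space (Rn n) = PiE {..<n} (\<lambda>_. UNIV)"
  by (simp add: Rn_def space_PiM)

lemma inner_n_meas1[measurable]: "(\<lambda>x. inner_n n x y) \<in> borel_measurable (Rn n)"
  unfolding inner_n_def Rn_def by measurable

lemma inner_n_meas2[measurable]: "(\<lambda>x. inner_n n x x) \<in> borel_measurable (Rn n)"
  unfolding inner_n_def Rn_def by measurable

lemma comp_meas[measurable]: "i < n \<Longrightarrow> (\<lambda>x. x i) \<in> borel_measurable (Rn n)"
  unfolding Rn_def by measurable

lemma nz_meas[measurable]: "nz n \<in> Rn n \<rightarrow>\<^sub>M Rn n"
  unfolding nz_def
  apply (subst (2) Rn_def)
  apply (rule measurable_restrict)
  apply simp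
  done

lemma ball_n_sets[measurable]: "ball_n n \<in> sets (Rn n)"
proof -
  have "ball_n n = {x \<in> space (Rn n). inner_n n x x \<le> 1}" by (auto simp: ball_n_def space_Rn)
  also have "\<dots> \<in> sets (Rn n)" by measurable
  finally show ?thesis .
qed

lemma sphere_n_sets[measurable]: "sphere_n n \<in> sets (Rn n)"
proof -
  have "sphere_n n = {x \<in> space (Rn n). inner_n n x x = 1}" by (auto simp: sphere_n_def space_Rn)
  also have "\<dots> \<in> sets (Rn n)" by measurable
  finally show ?thesis .
qed

lemma cap_sets[measurable]: "{v \<in> sphere_n n. inner_n n v u > c} \<in> sets (Rn n)"
proof -
  have "{v \<in> sphere_n n. inner_n n v u > c} = {x \<in> space (Rn n). inner_n n x x = 1 \<and> inner_n n x u > c}"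
    by (auto simp: sphere_n_def space_Rn)
  also have "\<dots> \<in> sets (Rn n)" by measurable
  finally show ?thesis .
qed

lemma lborel_affine_emeasure:
  fixes r :: real assumes r: "r > 0" and A: "A \<in> sets borel"
  shows "emeasure lborel A = ennreal r * emeasure lborel ((\<lambda>x. t + r * x) -` A)"
proof -
  have "emeasure lborel A = emeasure (density (distr lborel borel (\<lambda>x. t + r * x)) (\<lambda>_. ennreal \<bar>r\<bar>)) A"
    using lborel_real_affine[of r t] r by simp
  also have "\<dots> = ennreal r * emeasure (distr lborel borel (\<lambda>x. t + r * x)) A"
    using r A by (subst emeasure_density_const) auto
  also have "\<dots> = ennreal r * emeasure lborel ((\<lambda>x. t + r * x) -` A)"
    using A by (subst emeasure_distr) auto
  finally show ?thesis .
qed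

lemma affine_vimage_sets[measurable]: "A \<in> sets borel \<Longrightarrow> (\<lambda>x::real. t + r * x) -` A \<in> sets borel"
  using measurable_sets_borel[of "\<lambda>x::real. t + r*x" borel A] by simp

lemma emeasure_Rn_box:
  assumes "\<And>i. i < n \<Longrightarrow> A i \<in> sets borel"
  shows "emeasure (Rn n) (PiE {..<n} A) = (\<Prod>i<n. emeasure lborel (A i))"
proof -
  interpret product_sigma_finite "\<lambda>_::nat. lborel :: real measure" by standard
  show ?thesis unfolding Rn_def using assms by (subst emeasure_PiM) auto
qed

definition aff :: "nat \<Rightarrow> (nat \<Rightarrow> real) \<Rightarrow> real \<Rightarrow> (nat \<Rightarrow> real) \<Rightarrow> (nat \<Rightarrow> real)" where
  "aff n c r x = restrict (\<lambda>i. c i + r * x i) {..<n}"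

lemma aff_meas[measurable]: "aff n c r \<in> Rn n \<rightarrow>\<^sub>M Rn n"
  unfolding aff_def
  apply (subst (2) Rn_def)
  apply (rule measurable_restrict)
  apply simp
  done

lemma Rn_affine_distr:
  fixes r :: real assumes r: "r > 0"
  shows "distr (density (Rn n) (\<lambda>_. ennreal (r^n))) (Rn n) (aff n c r) = Rn n"
proof -
  interpret product_sigma_finite "\<lambda>_::nat. lborel :: real measure" by standard
  show ?thesis
    unfolding Rn_def[of n, symmetric]
  proof -
    have "distr (density (Rn n) (\<lambda>_. ennreal (r^n))) (Rn n) (aff n c r) = PiM {..<n} (\<lambda>_. lborel)"
    proof (rule PiM_eqI)
      show "finite {..<n}" by simp
      show "sets (distr (density (Rn n) (\<lambda>_. ennreal (r ^ n))) (Rn n) (aff n c r)) = sets (PiM {..<n} (\<lambda>_. lborel))"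
        by (simp add: Rn_def)
      fix A :: "nat \<Rightarrow> real set" assume A: "\<And>i. i \<in> {..<n} \<Longrightarrow> A i \<in> sets lborel"
      have AR: "PiE {..<n} A \<in> sets (Rn n)" unfolding Rn_def using A by (intro sets_PiM_I_finite) auto
      have pre: "aff n c r -` PiE {..<n} A \<inter> space (Rn n) = PiE {..<n} (\<lambda>i. (\<lambda>x. c i + r * x) -` A i)"
        by (auto simp: aff_def space_Rn PiE_iff extensional_def)
      have "emeasure (distr (density (Rn n) (\<lambda>_. ennreal (r ^ n))) (Rn n) (aff n c r)) (PiE {..<n} A)
          = ennreal (r^n) * emeasure (Rn n) (PiE {..<n} (\<lambda>i. (\<lambda>x. c i + r * x) -` A i))"
        using AR by (subst emeasure_distr) (auto simp: pre[symmetric] intro!: emeasure_density_const)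
      also have "\<dots> = ennreal (r^n) * (\<Prod>i<n. emeasure lborel ((\<lambda>x. c i + r * x) -` A i))"
        using A by (subst emeasure_Rn_box) (auto intro: affine_vimage_sets)
      also have "\<dots> = (\<Prod>i<n. ennreal r * emeasure lborel ((\<lambda>x. c i + r * x) -` A i))"
        using r by (simp add: prod.distrib ennreal_power)
      also have "\<dots> = (\<Prod>i<n. emeasure lborel (A i))"
        using A r by (intro prod.cong refl lborel_affine_emeasure[symmetric]) auto
      finally show "emeasure (distr (density (Rn n) (\<lambda>_. ennreal (r ^ n))) (Rn n) (aff n c r)) (PiE {..<n} A)
          = (\<Prod>i\<in>{..<n}. emeasure lborel (A i))" by simp
    qed
    then show "distr (density (Rn n) (\<lambda>_. ennreal (r^n))) (Rn n) (aff n c r) = Rn n"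
      by (simp add: Rn_def)
  qed
qed

lemma Rn_affine:
  fixes r :: real assumes r: "r > 0" and B: "B \<in> sets (Rn n)"
  shows "emeasure (Rn n) B = ennreal (r^n) * emeasure (Rn n) (aff n c r -` B \<inter> space (Rn n))"
proof -
  have "emeasure (Rn n) B = emeasure (distr (density (Rn n) (\<lambda>_. ennreal (r^n))) (Rn n) (aff n c r)) B"
    by (simp add: Rn_affine_distr[OF r])
  also have "\<dots> = ennreal (r^n) * emeasure (Rn n) (aff n c r -` B \<inter> space (Rn n))"
    using B by (subst emeasure_distr) (auto intro!: emeasure_density_const)
  finally show ?thesis .
qed

lemma inner_n_add_left: "inner_n n (\<lambda>i. a i + b i) y = inner_n n a y + inner_n n b y"
  by (simp add: inner_n_def algebra_simps sum.distrib)

lemma inner_n_diff_left: "inner_n n (\<lambda>i. a i - b i) y = inner_n n a y - inner_n n b y"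
  by (simp add: inner_n_def algebra_simps sum_subtractf)

lemma inner_n_scale_left: "inner_n n (\<lambda>i. r * a i) y = r * inner_n n a y"
  by (simp add: inner_n_def algebra_simps sum_distrib_left)

lemma inner_n_scale_right: "inner_n n y (\<lambda>i. r * a i) = r * inner_n n y a"
  by (simp add: inner_n_def algebra_simps sum_distrib_left)

lemma inner_n_CS: "\<bar>inner_n n a b\<bar> \<le> nrm n a * nrm n b"
proof -
  have "(inner_n n a b)\<^sup>2 \<le> inner_n n a a * inner_n n b b"
    using Cauchy_Schwarz_ineq_sum[of a b "{..<n}"] by (simp add: inner_n_def power2_eq_square)
  then have "sqrt ((inner_n n a b)\<^sup>2) \<le> sqrt (inner_n n a a * inner_n n b b)" by (rule real_sqrt_le_mono)
  then show ?thesis by (simp add: nrm_def real_sqrt_mult)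
qed

lemma nrm_sq: "(nrm n a)^2 = inner_n n a a"
  by (simp add: nrm_def inner_n_nonneg)

lemma ball_box: "ball_n n \<subseteq> PiE {..<n} (\<lambda>_. {-1..1})"
proof
  fix x assume x: "x \<in> ball_n n"
  { fix i assume i: "i < n"
    have "x i * x i \<le> (\<Sum>j<n. x j * x j)" using i by (intro member_le_sum) auto
    also have "\<dots> \<le> 1" using x by (simp add: ball_n_def inner_n_def)
    finally have "(x i)\<^sup>2 \<le> 1\<^sup>2" by (simp add: power2_eq_square)
    then have "\<bar>x i\<bar> \<le> 1" using abs_le_square_iff by (metis abs_one)
    then have "x i \<in> {-1..1}" by auto }
  then show "x \<in> PiE {..<n} (\<lambda>_. {-1..1})" using x by (auto simp: ball_n_def PiE_iff)
qed

lemma box_ball: assumes n: "n \<ge> 1" shows "PiE {..<n} (\<lambda>_. {-1/real n..1/real n}) \<subseteq> ball_n n"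
proof
  fix x assume x: "x \<in> PiE {..<n} (\<lambda>_. {-1/real n..1/real n})"
  have "(\<Sum>j<n. x j * x j) \<le> (\<Sum>j<n. (1/real n) * (1/ real n))"
  proof (intro sum_mono)
    fix j assume "j \<in> {..<n}"
    then have "- (1 / real n) \<le> x j \<and> x j \<le> 1 / real n" using x unfolding PiE_iff by auto
    then have "\<bar>x j\<bar> \<le> 1/real n" by linarith
    then have "\<bar>x j\<bar> * \<bar>x j\<bar> \<le> (1/real n) * (1/ real n)"
      by (intro mult_mono) auto
    then show "x j * x j \<le> (1/real n) * (1/ real n)" by (simp only: abs_mult_self_eq)
  qed
  also have "\<dots> = real n * ((1/real n) * (1/ real n))" by simp
  also have "\<dots> = 1 / real n" using n by simp
  also have "\<dots> \<le> 1" using n by simp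
  finally show "x \<in> ball_n n" using x by (auto simp: ball_n_def inner_n_def PiE_iff)
qed

lemma ball_fin: "emeasure (Rn n) (ball_n n) < \<infinity>"
proof -
  have "emeasure (Rn n) (ball_n n) \<le> emeasure (Rn n) (PiE {..<n} (\<lambda>_. {-1..1}))"
    by (intro emeasure_mono ball_box) (simp add: Rn_def sets_PiM_I_finite)
  also have "\<dots> = (\<Prod>i<n. emeasure lborel {-1..1::real})" by (subst emeasure_Rn_box) auto
  also have "\<dots> < \<infinity>" by (simp add: power_less_top_ennreal)
  finally show ?thesis .
qed

lemma ball_pos: assumes n: "n \<ge> 1" shows "emeasure (Rn n) (ball_n n) > 0"
proof -
  have "0 < (\<Prod>i<n. emeasure lborel {-1/real n..1/real n})"
    using n by simp (subst ennreal_power, auto)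
  also have "\<dots> = emeasure (Rn n) (PiE {..<n} (\<lambda>_. {-1/real n..1/real n}))" by (subst emeasure_Rn_box) auto
  also have "\<dots> \<le> emeasure (Rn n) (ball_n n)"
    by (intro emeasure_mono box_ball n) simp
  finally show ?thesis .
qed

lemma unif_sets[simp, measurable_cong]: "sets (unif_sphere n) = sets (Rn n)"
  by (simp add: unif_sphere_nz)

lemma unif_space[simp]: "space (unif_sphere n) = space (Rn n)"
  by (simp add: unif_sphere_nz)

lemma unif_prob: assumes n: "n \<ge> 1" shows "prob_space (unif_sphere n)"
proof -
  have "prob_space (uniform_measure (Rn n) (ball_n n))"
    using ball_pos[OF n] ball_fin[of n] by (intro prob_space_uniform_measure) auto
  then show ?thesis unfolding unif_sphere_nz by (rule prob_space.prob_space_distr) simp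
qed

lemma emeasure_unif: assumes A: "A \<in> sets (Rn n)"
  shows "emeasure (unif_sphere n) A = emeasure (Rn n) (ball_n n \<inter> (nz n -` A \<inter> space (Rn n))) / emeasure (Rn n) (ball_n n)"
  unfolding unif_sphere_nz using A
  by (subst emeasure_distr) (auto intro!: emeasure_uniform_measure)

lemma inner_nz: "inner_n n (nz n x) y = inner_n n x y / sqrt (inner_n n x x)"
  by (simp add: nz_def inner_n_def sum_divide_distrib)

lemma nz_sphere: assumes "inner_n n x x > 0" shows "nz n x \<in> sphere_n n"
proof -
  have "inner_n n (\<lambda>i. x i / sqrt (inner_n n x x)) (\<lambda>i. x i / sqrt (inner_n n x x)) = inner_n n x x / (sqrt (inner_n n x x))\<^sup>2"
    by (simp add: inner_n_def power2_eq_square sum_divide_distrib)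
  also have "\<dots> = 1" using assms by simp
  finally show ?thesis by (simp add: sphere_n_def nz_def)
qed

lemma cap_pos:
  assumes n: "n \<ge> 1" and u: "u \<in> sphere_n n" and r: "0 < r" "r \<le> 1/4"
  shows "emeasure (unif_sphere n) {v \<in> sphere_n n. inner_n n v u > 1 - 4 * r} \<ge> ennreal (r^n)"
proof -
  define c where "c i = u i / 2" for i
  define G where "G = {x \<in> space (Rn n). inner_n n (\<lambda>i. x i - c i) (\<lambda>i. x i - c i) \<le> r\<^sup>2}"
  have uu: "inner_n n u u = 1" using u by (simp add: sphere_n_def)
  have G_sets: "G \<in> sets (Rn n)" unfolding G_def inner_n_def by measurable
  have pre: "aff n c r -` G \<inter> space (Rn n) = ball_n n"
  proof -
    have "inner_n n (\<lambda>i. aff n c r x i - c i) (\<lambda>i. aff n c r x i - c i) = r\<^sup>2 * inner_n n x x" for x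
      by (simp add: aff_def inner_n_def sum_distrib_left power2_eq_square algebra_simps)
    moreover have "aff n c r x \<in> space (Rn n)" for x by (simp add: aff_def space_Rn)
    ultimately show ?thesis using r by (auto simp: G_def ball_n_def space_Rn)
  qed
  have LG: "emeasure (Rn n) G = ennreal (r^n) * emeasure (Rn n) (ball_n n)"
    using Rn_affine[OF r(1) G_sets, of c] pre by simp
  have sub: "G \<subseteq> ball_n n \<inter> (nz n -` {v \<in> sphere_n n. inner_n n v u > 1 - 4 * r} \<inter> space (Rn n))"
  proof
    fix x assume x: "x \<in> G"
    define d where "d i = x i - c i" for i
    have xcd: "x = (\<lambda>i. c i + d i)" by (auto simp: d_def)
    have dd: "inner_n n d d \<le> r\<^sup>2" using x by (simp add: G_def d_def[abs_def])
    have nd: "nrm n d \<le> r" using real_sqrt_le_mono[OF dd] r by (simp add: nrm_def)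
    have cc: "inner_n n c c = 1/4" using uu by (simp add: c_def inner_n_def sum_divide_distrib[symmetric])
    have nc: "nrm n c = 1/2" unfolding nrm_def cc by (rule real_sqrt_unique) (auto simp: power2_eq_square)
    have cu: "inner_n n c u = 1/2" using uu by (simp add: c_def inner_n_def sum_divide_distrib[symmetric])
    have nu: "nrm n u = 1" using uu by (simp add: nrm_def)
    have cd: "\<bar>inner_n n c d\<bar> \<le> r / 2" using inner_n_CS[of n c d] nc nd by simp
    have du: "\<bar>inner_n n d u\<bar> \<le> r" using inner_n_CS[of n d u] nu nd by simp
    have xx: "inner_n n x x = inner_n n c c + 2 * inner_n n c d + inner_n n d d"
      by (subst (1 2) xcd) (simp add: inner_n_add_left inner_n_sym[of n _ "\<lambda>i. c i + d i"] inner_n_sym[of n d c])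
    have xx1: "inner_n n x x \<le> (1/2 + r)\<^sup>2" using xx cc cd dd by (simp add: power2_eq_square algebra_simps)
    have xu: "inner_n n x u = 1/2 + inner_n n d u"
      by (subst xcd) (simp add: inner_n_add_left cu)
    have xu1: "inner_n n x u \<ge> 1/2 - r" using xu du by linarith
    have "\<bar>inner_n n x u\<bar> \<le> nrm n x" using inner_n_CS[of n x u] nu by simp
    then have "\<bar>inner_n n x u\<bar>\<^sup>2 \<le> (nrm n x)\<^sup>2" by (rule power_mono) simp
    then have "(inner_n n x u)\<^sup>2 \<le> inner_n n x x" by (simp add: nrm_sq)
    moreover have "(inner_n n x u)\<^sup>2 > 0" using xu1 r by simp
    ultimately have xpos: "inner_n n x x > 0" by linarith
    have s1: "sqrt (inner_n n x x) \<le> 1/2 + r" using real_sqrt_le_mono[OF xx1] r by simp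
    have s0: "sqrt (inner_n n x x) > 0" using xpos by simp
    have "(1/2 - r) / (1/2 + r) \<le> inner_n n x u / sqrt (inner_n n x x)"
      using r xu1 s1 s0 by (intro frac_le) auto
    moreover have "1 - 4 * r < (1/2 - r) / (1/2 + r)"
      using r by (simp add: field_simps)
    ultimately have "inner_n n (nz n x) u > 1 - 4 * r" by (simp add: inner_nz)
    moreover have "(1/2 + r)\<^sup>2 \<le> 1"
    proof -
      have "(1/2 + r) * (1/2 + r) \<le> (3/4) * (3/4)" using r by (intro mult_mono) auto
      then show ?thesis by (simp add: power2_eq_square)
    qed
    then have "x \<in> ball_n n" using xx1 x by (auto simp: ball_n_def G_def space_Rn)
    ultimately show "x \<in> ball_n n \<inter> (nz n -` {v \<in> sphere_n n. inner_n n v u > 1 - 4 * r} \<inter> space (Rn n))"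
      using nz_sphere[OF xpos] x by (auto simp: G_def)
  qed
  have "ennreal (r^n) = emeasure (Rn n) G / emeasure (Rn n) (ball_n n)"
    using LG ball_pos[OF n] ball_fin[of n]
    by (simp add: ennreal_mult_divide_eq)
  also have "\<dots> \<le> emeasure (Rn n) (ball_n n \<inter> (nz n -` {v \<in> sphere_n n. inner_n n v u > 1 - 4 * r} \<inter> space (Rn n))) / emeasure (Rn n) (ball_n n)"
    by (intro divide_right_mono_ennreal emeasure_mono sub) measurable
  also have "\<dots> = emeasure (unif_sphere n) {v \<in> sphere_n n. inner_n n v u > 1 - 4 * r}"
    by (rule emeasure_unif[symmetric]) measurable
  finally show ?thesis .
qed

definition capset :: "nat \<Rightarrow> real \<Rightarrow> (nat \<Rightarrow> real) \<Rightarrow> (nat \<Rightarrow> real) set" where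
  "capset n r w = {v \<in> sphere_n n. inner_n n v w > 1 - 4 * r}"

lemma psf_unif: "n \<ge> 1 \<Longrightarrow> product_sigma_finite (\<lambda>_::nat. unif_sphere n)"
  unfolding product_sigma_finite_def
  using unif_prob prob_space_imp_sigma_finite by blast

lemma capset_sets[measurable]: "capset n r w \<in> sets (unif_sphere n)"
  unfolding capset_def by simp

lemma mlf_neg:
  assumes p: "p \<ge> 1" and u: "u \<in> sph p n"
  defines "u' \<equiv> u(0 := restrict (\<lambda>i. - u 0 i) {..<n})"
  shows "u' \<in> sph p n" "mlf p n Zt u' = - mlf p n Zt u"
proof -
  have "u 0 \<in> sphere_n n" using u p by (simp add: sph_def)
  then have "restrict (\<lambda>i. - u 0 i) {..<n} \<in> sphere_n n"
    by (simp add: sphere_n_def inner_n_def)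
  then show "u' \<in> sph p n" using u by (simp add: sph_def u'_def)
  have "mlf p n Zt u' = mlf p n Zt (\<lambda>j i. (if j = 0 then -1 else 1) * u j i)"
    by (intro mlf_cong) (auto simp: u'_def)
  also have "\<dots> = (\<Prod>j<p. (if j = 0 then -1 else 1)) * mlf p n Zt u" by (rule mlf_scale)
  also have "(\<Prod>j<p. (if j = 0 then -1 else (1::real))) = -1"
    using p by (subst prod.delta) auto
  finally show "mlf p n Zt u' = - mlf p n Zt u" by simp
qed

lemma L_bound:
  assumes n: "n \<ge> 1" and p: "p \<ge> 1" and a: "a > 0" and B: "B > 0"
    and I: "(\<integral>\<^sup>+v. ennreal (exp (a * mlf p n Zt v)) * indicator (PiE {..<p} (\<lambda>_. ball_n n)) v \<partial>PiM {..<p} (\<lambda>_. unif_sphere n)) \<le> ennreal B"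
  shows "Lsup p n Zt \<le> 2 * (ln B + real (p*n) * ln (32 * (real p)\<^sup>2)) / a"
proof -
  define r where "r = 1 / (32 * (real p)\<^sup>2)"
  have r0: "0 < r" using p by (simp add: r_def)
  have "1 \<le> (real p)\<^sup>2" using p by simp
  then have "4 \<le> 32 * (real p)\<^sup>2" by linarith
  then have r1: "r \<le> 1/4" unfolding r_def by (intro divide_le_eq[THEN iffD2]) auto
  have pr: "real p * sqrt (8 * r) = 1/2"
  proof -
    have "sqrt (8 * r) = 1 / (2 * real p)"
      using p by (intro real_sqrt_unique) (auto simp: r_def power2_eq_square field_simps)
    then show ?thesis using p by simp
  qed
  define L where "L = Lsup p n Zt"
  define R where "R = (ln B + real (p*n) * ln (32 * (real p)\<^sup>2)) / a"
  interpret PS: product_sigma_finite "\<lambda>_::nat. unif_sphere n" using psf_unif[OF n] .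
  have claim: "mlf p n Zt u \<le> L/2 + R" if u: "u \<in> sph p n" for u
  proof -
    define C where "C = PiE {..<p} (\<lambda>j. capset n r (u j))"
    have C_sets: "C \<in> sets (PiM {..<p} (\<lambda>_. unif_sphere n))"
      unfolding C_def by (intro sets_PiM_I_finite) (auto simp: capset_def)
    have lowC: "mlf p n Zt v \<ge> mlf p n Zt u - L/2" if v: "v \<in> C" for v
    proof -
      have vs: "v \<in> sph p n" using v by (auto simp: C_def sph_def capset_def PiE_iff)
      have "nrm n (\<lambda>i. u k i - v k i) \<le> sqrt (8 * r)" if k: "k < p" for k
      proof -
        have "u k \<in> sphere_n n" "v k \<in> sphere_n n" "inner_n n (v k) (u k) > 1 - 4 * r"
          using u v k by (auto simp: sph_def C_def capset_def PiE_iff)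
        then have "(nrm n (\<lambda>i. u k i - v k i))\<^sup>2 \<le> 8 * r"
          by (simp add: nrm_diff_sphere inner_n_sym[of n "u k"])
        then show ?thesis using nrm_nonneg real_sqrt_le_mono by fastforce
      qed
      then have "(\<Sum>k<p. nrm n (\<lambda>i. u k i - v k i)) \<le> real p * sqrt (8 * r)"
        using sum_mono[of "{..<p}" "\<lambda>k. nrm n (\<lambda>i. u k i - v k i)" "\<lambda>_. sqrt (8 * r)"] by simp
      then have "L * (\<Sum>k<p. nrm n (\<lambda>i. u k i - v k i)) \<le> L * (1/2)"
        using pr Lsup_nonneg[OF n] by (intro mult_left_mono) (auto simp: L_def)
      then show ?thesis using mlf_lip[OF n u vs, of Zt] by (simp add: L_def)
    qed
    have "ennreal (exp (a * (mlf p n Zt u - L/2))) * ennreal (r^(n*p))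
        \<le> ennreal (exp (a * (mlf p n Zt u - L/2))) * emeasure (PiM {..<p} (\<lambda>_. unif_sphere n)) C"
    proof (intro mult_left_mono)
      have "ennreal (r^(n*p)) = (\<Prod>j<p. ennreal (r^n))"
        using r0 by (simp add: ennreal_power power_mult)
      also have "\<dots> \<le> (\<Prod>j<p. emeasure (unif_sphere n) (capset n r (u j)))"
        using u r0 r1 by (intro prod_mono_ennreal) (auto simp: capset_def sph_def intro!: cap_pos n)
      also have "\<dots> = emeasure (PiM {..<p} (\<lambda>_. unif_sphere n)) C"
        unfolding C_def by (subst PS.emeasure_PiM) (auto simp: capset_def)
      finally show "ennreal (r^(n*p)) \<le> emeasure (PiM {..<p} (\<lambda>_. unif_sphere n)) C" .
    qed simp
    also have "\<dots> = (\<integral>\<^sup>+v. ennreal (exp (a * (mlf p n Zt u - L/2))) * indicator C v \<partial>PiM {..<p} (\<lambda>_. unif_sphere n))"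
      using C_sets by (rule nn_integral_cmult_indicator[symmetric])
    also have "\<dots> \<le> (\<integral>\<^sup>+v. ennreal (exp (a * mlf p n Zt v)) * indicator (PiE {..<p} (\<lambda>_. ball_n n)) v \<partial>PiM {..<p} (\<lambda>_. unif_sphere n))"
    proof (intro nn_integral_mono)
      fix v
      have "v \<in> C \<Longrightarrow> v \<in> PiE {..<p} (\<lambda>_. ball_n n)"
        by (auto simp: C_def capset_def PiE_iff sphere_n_def ball_n_def)
      then show "ennreal (exp (a * (mlf p n Zt u - L/2))) * indicator C v \<le> ennreal (exp (a * mlf p n Zt v)) * indicator (PiE {..<p} (\<lambda>_. ball_n n)) v"
        using lowC[of v] a by (cases "v \<in> C") auto
    qed
    also have "\<dots> \<le> ennreal B" by (rule I)
    finally have "ennreal (exp (a * (mlf p n Zt u - L/2)) * r^(n*p)) \<le> ennreal B"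
      using r0 by (simp add: ennreal_mult)
    then have "exp (a * (mlf p n Zt u - L/2)) * r^(n*p) \<le> B"
      using B by simp
    then have "ln (exp (a * (mlf p n Zt u - L/2)) * r^(n*p)) \<le> ln B"
      using r0 B by (subst ln_le_cancel_iff) auto
    then have "a * (mlf p n Zt u - L/2) + real (n*p) * ln r \<le> ln B"
      using r0 by (simp add: ln_mult ln_realpow)
    moreover have "ln r = - ln (32 * (real p)\<^sup>2)" using p by (simp add: r_def ln_div)
    ultimately have "a * (mlf p n Zt u - L/2) \<le> ln B + real (p*n) * ln (32 * (real p)\<^sup>2)"
      by (simp add: mult.commute)
    then show ?thesis using a by (simp add: R_def field_simps)
  qed
  have "L \<le> L/2 + R"
    unfolding L_def
  proof (rule Lsup_least[OF n])
    fix u assume u: "u \<in> sph p n"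
    show "\<bar>mlf p n Zt u\<bar> \<le> Lsup p n Zt / 2 + R"
      using claim[OF u] claim[OF mlf_neg(1)[OF p u]] mlf_neg(2)[OF p u, of Zt] by (simp add: L_def)
  qed
  then have "L \<le> 2 * R" by linarith
  then show ?thesis by (simp add: L_def R_def)
qed

lemma normal_shift_identity:
  "std_normal_density x * exp (b * x) = exp (b\<^sup>2 / 2) * normal_density b 1 x"
proof -
  have "exp (- x\<^sup>2 / 2) * exp (b * x) = exp (b\<^sup>2 / 2) * exp (- (x - b)\<^sup>2 / 2)"
    unfolding exp_add[symmetric] by (simp add: power2_eq_square field_simps)
  then show ?thesis by (simp add: std_normal_density_def normal_density_def)
qed

lemma (in prob_space) mgf_std_normal:
  assumes X: "distributed M lborel X (\<lambda>x. ennreal (std_normal_density x))"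
  shows "(\<integral>\<^sup>+\<omega>. ennreal (exp (b * X \<omega>)) \<partial>M) = ennreal (exp (b\<^sup>2 / 2))"
proof -
  have "(\<integral>\<^sup>+\<omega>. ennreal (exp (b * X \<omega>)) \<partial>M) = (\<integral>\<^sup>+x. ennreal (std_normal_density x) * ennreal (exp (b * x)) \<partial>lborel)"
    using distributed_nn_integral[OF X, of "\<lambda>x. ennreal (exp (b * x))"] by simp
  also have "\<dots> = (\<integral>\<^sup>+x. ennreal (exp (b\<^sup>2 / 2)) * ennreal (normal_density b 1 x) \<partial>lborel)"
    by (intro nn_integral_cong) (simp add: ennreal_mult[symmetric] normal_shift_identity)
  also have "\<dots> = ennreal (exp (b\<^sup>2 / 2)) * (\<integral>\<^sup>+x. ennreal (normal_density b 1 x) \<partial>lborel)"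
    by (rule nn_integral_cmult) simp
  also have "(\<integral>\<^sup>+x. ennreal (normal_density b 1 x) \<partial>lborel) = 1"
    by (subst nn_integral_eq_integral) auto
  finally show ?thesis by simp
qed

lemma (in prob_space) mgf_mlf:
  assumes indep: "indep_vars (\<lambda>_. borel) (\<lambda>i \<omega>. Zr \<omega> i) (tidx p n)"
    and gauss: "\<And>i. i \<in> tidx p n \<Longrightarrow> distributed M lborel (\<lambda>\<omega>. Zr \<omega> i) (\<lambda>x. ennreal (std_normal_density x))"
  shows "(\<integral>\<^sup>+\<omega>. ennreal (exp (a * mlf p n (Zr \<omega>) v)) \<partial>M)
     = ennreal (exp (a\<^sup>2 / 2 * (\<Prod>j<p. inner_n n (v j) (v j))))"
proof -
  define c where "c i = (\<Prod>j<p. v j (i!j))" for i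
  have "(\<integral>\<^sup>+\<omega>. ennreal (exp (a * mlf p n (Zr \<omega>) v)) \<partial>M)
      = (\<integral>\<^sup>+\<omega>. (\<Prod>i\<in>tidx p n. ennreal (exp ((a * c i) * Zr \<omega> i))) \<partial>M)"
    by (intro nn_integral_cong)
       (simp add: mlf_def c_def sum_distrib_left exp_sum finite_tidx prod_ennreal mult.commute mult.left_commute)
  also have "\<dots> = (\<Prod>i\<in>tidx p n. \<integral>\<^sup>+\<omega>. ennreal (exp ((a * c i) * Zr \<omega> i)) \<partial>M)"
  proof (rule indep_vars_nn_integral)
    show "finite (tidx p n)" by (rule finite_tidx)
    show "indep_vars (\<lambda>_. borel) (\<lambda>i \<omega>. ennreal (exp ((a * c i) * Zr \<omega> i))) (tidx p n)"
      by (rule indep_vars_compose2[OF indep, where Y="\<lambda>i z. ennreal (exp ((a * c i) * z))"]) simp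
  qed simp
  also have "\<dots> = (\<Prod>i\<in>tidx p n. ennreal (exp ((a * c i)\<^sup>2 / 2)))"
    by (intro prod.cong refl mgf_std_normal gauss)
  also have "\<dots> = ennreal (exp (\<Sum>i\<in>tidx p n. (a * c i)\<^sup>2 / 2))"
    by (simp add: prod_ennreal exp_sum finite_tidx)
  also have "(\<Sum>i\<in>tidx p n. (a * c i)\<^sup>2 / 2) = a\<^sup>2 / 2 * (\<Sum>i\<in>tidx p n. (c i)\<^sup>2)"
    by (simp add: power_mult_distrib sum_distrib_left sum_divide_distrib algebra_simps)
  also have "(\<Sum>i\<in>tidx p n. (c i)\<^sup>2) = (\<Prod>j<p. inner_n n (v j) (v j))"
    unfolding c_def by (rule sum_sq_tidx)
  finally show ?thesis .
qed

definition PP :: "nat \<Rightarrow> nat \<Rightarrow> (nat \<Rightarrow> nat \<Rightarrow> real) measure" where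
  "PP n p = PiM {..<p} (\<lambda>_. unif_sphere n)"

definition Qb :: "nat \<Rightarrow> nat \<Rightarrow> (nat \<Rightarrow> nat \<Rightarrow> real) set" where
  "Qb n p = PiE {..<p} (\<lambda>_. ball_n n)"

definition Iint :: "nat \<Rightarrow> nat \<Rightarrow> (nat list \<Rightarrow> real) \<Rightarrow> real \<Rightarrow> ennreal" where
  "Iint p n Zt a = (\<integral>\<^sup>+v. ennreal (exp (a * mlf p n Zt v)) * indicator (Qb n p) v \<partial>PP n p)"

lemma distributed_borel: "distributed M lborel X f \<Longrightarrow> X \<in> borel_measurable M"
  by (drule distributed_measurable) simp

lemma prob_PP: "n \<ge> 1 \<Longrightarrow> prob_space (PP n p)"
  unfolding PP_def by (rule prob_space_PiM) (rule unif_prob)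

lemma Qb_sets[measurable]: "Qb n p \<in> sets (PP n p)"
  unfolding Qb_def PP_def by (intro sets_PiM_I_finite) auto

lemma comp_meas_unif: "k < n \<Longrightarrow> (\<lambda>w. w k) \<in> borel_measurable (unif_sphere n)"
  using comp_meas[of k n] by (simp add: measurable_cong_sets[OF unif_sets refl])

lemma meas_mlf_pair:
  assumes Zm: "\<And>i. i \<in> tidx p n \<Longrightarrow> (\<lambda>\<omega>. Zr \<omega> i) \<in> borel_measurable M"
  shows "(\<lambda>x. mlf p n (Zr (fst x)) (snd x)) \<in> borel_measurable (M \<Otimes>\<^sub>M PP n p)"
  unfolding mlf_def
proof (intro borel_measurable_sum borel_measurable_times borel_measurable_prod)
  fix i assume i: "i \<in> tidx p n"
  show "(\<lambda>x. Zr (fst x) i) \<in> borel_measurable (M \<Otimes>\<^sub>M PP n p)"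
    using measurable_compose[OF measurable_fst Zm[OF i], of "PP n p"] by simp
  fix j assume j: "j \<in> {..<p}"
  have "(\<lambda>v. v j) \<in> PP n p \<rightarrow>\<^sub>M unif_sphere n"
    unfolding PP_def using j by (rule measurable_component_singleton)
  moreover have "(\<lambda>w. w (i!j)) \<in> borel_measurable (unif_sphere n)"
    using i j by (intro comp_meas_unif tidx_lt) auto
  ultimately have "(\<lambda>v. v j (i!j)) \<in> borel_measurable (PP n p)"
    by (rule measurable_compose)
  then show "(\<lambda>x. snd x j (i!j)) \<in> borel_measurable (M \<Otimes>\<^sub>M PP n p)"
    using measurable_compose[OF measurable_snd] by blast
qed

lemma meas_mlf_omega:
  assumes Zm: "\<And>i. i \<in> tidx p n \<Longrightarrow> (\<lambda>\<omega>. Zr \<omega> i) \<in> borel_measurable M"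
  shows "(\<lambda>\<omega>. exp (a * mlf p n (Zr \<omega>) v)) \<in> borel_measurable M"
proof -
  have "(\<lambda>\<omega>. mlf p n (Zr \<omega>) v) \<in> borel_measurable M"
    unfolding mlf_def by (intro borel_measurable_sum borel_measurable_times Zm) auto
  then show ?thesis by measurable
qed

lemma meas_integrand:
  assumes Zm: "\<And>i. i \<in> tidx p n \<Longrightarrow> (\<lambda>\<omega>. Zr \<omega> i) \<in> borel_measurable M"
  shows "(\<lambda>x. ennreal (exp (a * mlf p n (Zr (fst x)) (snd x))) * indicator (Qb n p) (snd x)) \<in> borel_measurable (M \<Otimes>\<^sub>M PP n p)"
  using meas_mlf_pair[OF Zm] by measurable

lemma Iint_meas:
  assumes n: "n \<ge> 1" and Zm: "\<And>i. i \<in> tidx p n \<Longrightarrow> (\<lambda>\<omega>. Zr \<omega> i) \<in> borel_measurable M"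
  shows "(\<lambda>\<omega>. Iint p n (Zr \<omega>) a) \<in> borel_measurable M"
proof -
  interpret P: prob_space "PP n p" using prob_PP[OF n] .
  show ?thesis unfolding Iint_def
    using P.borel_measurable_nn_integral[of "\<lambda>\<omega> v. ennreal (exp (a * mlf p n (Zr \<omega>) v)) * indicator (Qb n p) v" M]
      meas_integrand[OF Zm, where a=a] by (simp add: split_beta')
qed

lemma E_Iint:
  assumes prob: "prob_space M" and n: "n \<ge> 1"
    and indep: "prob_space.indep_vars M (\<lambda>_. borel) (\<lambda>i \<omega>. Zr \<omega> i) (tidx p n)"
    and gauss: "\<And>i. i \<in> tidx p n \<Longrightarrow> distributed M lborel (\<lambda>\<omega>. Zr \<omega> i) (\<lambda>x. ennreal (std_normal_density x))"
  shows "(\<integral>\<^sup>+\<omega>. Iint p n (Zr \<omega>) a \<partial>M) \<le> ennreal (exp (a\<^sup>2 / 2))"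
proof -
  interpret M: prob_space M by (rule prob)
  interpret P: prob_space "PP n p" using prob_PP[OF n] .
  interpret MP: pair_sigma_finite M "PP n p" ..
  have Zm: "\<And>i. i \<in> tidx p n \<Longrightarrow> (\<lambda>\<omega>. Zr \<omega> i) \<in> borel_measurable M"
    using gauss by (auto intro: distributed_borel)
  have "(\<integral>\<^sup>+\<omega>. Iint p n (Zr \<omega>) a \<partial>M)
      = (\<integral>\<^sup>+v. (\<integral>\<^sup>+\<omega>. ennreal (exp (a * mlf p n (Zr \<omega>) v)) * indicator (Qb n p) v \<partial>M) \<partial>PP n p)"
    unfolding Iint_def
    by (rule MP.Fubini'[symmetric]) (use meas_integrand[OF Zm, where a=a] in \<open>simp add: split_beta'\<close>)
  also have "\<dots> = (\<integral>\<^sup>+v. ennreal (exp (a\<^sup>2 / 2 * (\<Prod>j<p. inner_n n (v j) (v j)))) * indicator (Qb n p) v \<partial>PP n p)"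
  proof (intro nn_integral_cong)
    fix v
    show "(\<integral>\<^sup>+\<omega>. ennreal (exp (a * mlf p n (Zr \<omega>) v)) * indicator (Qb n p) v \<partial>M) =
      ennreal (exp (a\<^sup>2 / 2 * (\<Prod>j<p. inner_n n (v j) (v j)))) * indicator (Qb n p) v"
      by (subst nn_integral_multc) (auto intro: meas_mlf_omega[OF Zm] simp: M.mgf_mlf[OF indep gauss])
  qed
  also have "\<dots> \<le> (\<integral>\<^sup>+v. ennreal (exp (a\<^sup>2 / 2)) \<partial>PP n p)"
  proof (intro nn_integral_mono)
    fix v
    show "ennreal (exp (a\<^sup>2 / 2 * (\<Prod>j<p. inner_n n (v j) (v j)))) * indicator (Qb n p) v \<le> ennreal (exp (a\<^sup>2 / 2))"
    proof (cases "v \<in> Qb n p")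
      case True
      then have "(\<Prod>j<p. inner_n n (v j) (v j)) \<le> 1"
        by (intro prod_le_1) (auto simp: Qb_def ball_n_def inner_n_nonneg)
      then have "a\<^sup>2 / 2 * (\<Prod>j<p. inner_n n (v j) (v j)) \<le> a\<^sup>2 / 2"
        by (simp add: mult_left_le)
      then show ?thesis using True by simp
    qed simp
  qed
  also have "\<dots> = ennreal (exp (a\<^sup>2 / 2))" by (simp add: P.emeasure_space_1)
  finally show ?thesis .
qed

lemma AE_Lsup:
  fixes Z :: "nat \<Rightarrow> 'a \<Rightarrow> nat list \<Rightarrow> real"
  assumes prob: "prob_space M" and p: "p \<ge> 1"
    and indep: "\<And>n. n \<ge> 1 \<Longrightarrow> prob_space.indep_vars M (\<lambda>_. borel) (\<lambda>i \<omega>. Z n \<omega> i) (tidx p n)"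
    and gauss: "\<And>n i. n \<ge> 1 \<Longrightarrow> i \<in> tidx p n \<Longrightarrow>
        distributed M lborel (\<lambda>\<omega>. Z n \<omega> i) (\<lambda>x. ennreal (std_normal_density x))"
  shows "AE \<omega> in M. eventually (\<lambda>n. Lsup p n (Z n \<omega>) \<le> 2 * (1 + real p * ln (32 * (real p)\<^sup>2)) * sqrt (real n)) sequentially"
proof -
  interpret M: prob_space M by (rule prob)
  define A where "A n = (if n = 0 then {} else {\<omega> \<in> space M. ennreal (exp (real n)) \<le> Iint p n (Z n \<omega>) (sqrt (real n))})" for n
  have Zm: "\<And>n i. n \<ge> 1 \<Longrightarrow> i \<in> tidx p n \<Longrightarrow> (\<lambda>\<omega>. Z n \<omega> i) \<in> borel_measurable M"
    using gauss by (auto intro: distributed_borel)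
  have A_sets: "A n \<in> sets M" for n
  proof (cases "n = 0")
    case False
    then have [measurable]: "(\<lambda>\<omega>. Iint p n (Z n \<omega>) (sqrt (real n))) \<in> borel_measurable M"
      by (intro Iint_meas Zm) auto
    show ?thesis using False unfolding A_def by simp
  qed (simp add: A_def)
  have A_le: "emeasure M (A n) \<le> ennreal (exp (- real n / 2))" for n
  proof (cases "n = 0")
    case True then show ?thesis by (simp add: A_def)
  next
    case False
    then have n: "n \<ge> 1" by simp
    define u where "u \<omega> = Iint p n (Z n \<omega>) (sqrt (real n))" for \<omega>
    have [measurable]: "u \<in> borel_measurable M" unfolding u_def using n by (intro Iint_meas Zm) auto
    define c where "c = ennreal (exp (- real n))"
    have "A n \<subseteq> {x \<in> space M. 1 \<le> c * u x}"
    proof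
      fix x assume "x \<in> A n"
      then have x: "x \<in> space M" "ennreal (exp (real n)) \<le> u x" using False by (auto simp: A_def u_def)
      have "1 = c * ennreal (exp (real n))" by (simp add: c_def ennreal_mult[symmetric] exp_add[symmetric])
      also have "\<dots> \<le> c * u x" using x(2) by (rule mult_left_mono) simp
      finally show "x \<in> {x \<in> space M. 1 \<le> c * u x}" using x by simp
    qed
    moreover have "{x \<in> space M. 1 \<le> c * u x} \<in> sets M" by measurable
    ultimately have "emeasure M (A n) \<le> emeasure M {x \<in> space M. 1 \<le> c * u x}"
      by (intro emeasure_mono)
    also have "\<dots> \<le> c * (\<integral>\<^sup>+x. u x * indicator (space M) x \<partial>M)"
      by (intro nn_integral_Markov_inequality) auto
    also have "(\<integral>\<^sup>+x. u x * indicator (space M) x \<partial>M) = (\<integral>\<^sup>+x. u x \<partial>M)"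
      by (intro nn_integral_cong) simp
    also have "\<dots> \<le> ennreal (exp ((sqrt (real n))\<^sup>2 / 2))"
      unfolding u_def by (rule E_Iint[OF prob n indep[OF n] gauss[OF n]])
    also have "(sqrt (real n))\<^sup>2 = real n" by simp
    also have "c * ennreal (exp (real n / 2)) = ennreal (exp (- real n / 2))"
      by (simp add: c_def ennreal_mult[symmetric] exp_add[symmetric])
    finally show ?thesis by (simp add: mult_left_mono)
  qed
  have meas_le: "measure M (A n) \<le> exp (- real n / 2)" for n
    using A_le[of n] by (simp add: M.emeasure_eq_measure)
  have geo: "exp (- real n / 2) = exp (- 1 / 2) ^ n" for n
    by (simp add: exp_of_nat_mult[symmetric])
  have "summable (\<lambda>n. exp (- real n / 2))"
    unfolding geo by (rule summable_geometric) simp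
  then have summ: "summable (\<lambda>n. measure M (A n))"
    by (rule summable_comparison_test[rotated]) (use meas_le in auto)
  have "AE \<omega> in M. eventually (\<lambda>n. \<omega> \<in> space M - A n) sequentially"
    by (rule borel_cantelli_AE1[OF A_sets _ summ]) (simp add: M.emeasure_eq_measure)
  then show ?thesis
  proof (rule AE_mp, intro AE_I2 impI)
    fix \<omega> assume ev: "eventually (\<lambda>n. \<omega> \<in> space M - A n) sequentially"
    show "eventually (\<lambda>n. Lsup p n (Z n \<omega>) \<le> 2 * (1 + real p * ln (32 * (real p)\<^sup>2)) * sqrt (real n)) sequentially"
      using ev eventually_ge_at_top[of 1]
    proof eventually_elim
      case (elim n)
      then have n: "n \<ge> 1" and I: "Iint p n (Z n \<omega>) (sqrt (real n)) \<le> ennreal (exp (real n))"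
        by (auto simp: A_def)
      have "Lsup p n (Z n \<omega>) \<le> 2 * (ln (exp (real n)) + real (p*n) * ln (32 * (real p)\<^sup>2)) / sqrt (real n)"
        using I n by (intro L_bound[OF n p]) (auto simp: Iint_def PP_def Qb_def)
      also have "\<dots> = 2 * (1 + real p * ln (32 * (real p)\<^sup>2)) * (real n / sqrt (real n))"
        by (simp add: algebra_simps add_divide_distrib)
      also have "real n / sqrt (real n) = sqrt (real n)" by (rule real_div_sqrt) simp
      finally show ?case .
    qed
  qed
qed

definition fpost :: "nat \<Rightarrow> nat \<Rightarrow> real \<Rightarrow> (nat list \<Rightarrow> real) \<Rightarrow> (nat \<Rightarrow> real) \<Rightarrow> real" where
  "fpost p n lam Y \<theta> = exp (1/2 * sqrt (real n) * lam * tinner p n (tpow p \<theta>) Y)"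

lemma posterior_fpost: "posterior p n lam Y A =
   (LINT \<theta>|unif_sphere n. indicator A \<theta> * fpost p n lam Y \<theta>) / (LINT \<theta>|unif_sphere n. fpost p n lam Y \<theta>)"
  by (simp add: posterior_def fpost_def set_lebesgue_integral_def)

lemma fpost_meas[measurable]: "fpost p n lam Y \<in> borel_measurable (unif_sphere n)"
proof -
  have "(\<lambda>\<theta>. tinner p n (tpow p \<theta>) Y) \<in> borel_measurable (unif_sphere n)"
    unfolding tinner_def tpow_def
    by (intro borel_measurable_sum borel_measurable_times borel_measurable_prod comp_meas_unif)
       (auto intro: tidx_lt)
  then show ?thesis unfolding fpost_def by measurable
qed

lemma fpost_eq: "fpost p n lam (obsY p n lam \<theta>0 Zt) \<theta> =
   exp (1/2 * real n * lam\<^sup>2 * (inner_n n \<theta> \<theta>0)^p + 1/2 * sqrt (real n) * lam * mlf p n Zt (\<lambda>_. \<theta>))"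
proof -
  have "sqrt (real n) * sqrt (real n) = real n" by simp
  then show ?thesis unfolding fpost_def tinner_obs
    by (simp add: algebra_simps power2_eq_square)
qed

lemma nrm_le1: "inner_n n \<theta> \<theta> \<le> 1 \<Longrightarrow> nrm n \<theta> \<le> 1"
  by (simp add: nrm_def)

lemma W_bound: assumes n: "n \<ge> 1" and th: "inner_n n \<theta> \<theta> \<le> 1"
  shows "\<bar>mlf p n Zt (\<lambda>_. \<theta>)\<bar> \<le> Lsup p n Zt"
proof -
  have "\<bar>mlf p n Zt (\<lambda>_. \<theta>)\<bar> \<le> Lsup p n Zt * (\<Prod>j<p. nrm n \<theta>)" by (rule mlf_bound[OF n])
  also have "(\<Prod>j<p. nrm n \<theta>) \<le> 1"
    using nrm_le1[OF th] nrm_nonneg[of n \<theta>] by (simp add: power_le_one)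
  then have "Lsup p n Zt * (\<Prod>j<p. nrm n \<theta>) \<le> Lsup p n Zt"
    using Lsup_nonneg[OF n] by (simp add: mult_left_le)
  finally show ?thesis .
qed

lemma m_bound: assumes th: "inner_n n \<theta> \<theta> \<le> 1" and t0: "\<theta>0 \<in> sphere_n n"
  shows "\<bar>inner_n n \<theta> \<theta>0\<bar> \<le> 1"
  using inner_n_CS[of n \<theta> \<theta>0] nrm_le1[OF th] nrm_sphere[OF t0] nrm_nonneg[of n \<theta>] by simp

lemma AE_unif_ball: "AE \<theta> in unif_sphere n. inner_n n \<theta> \<theta> \<le> 1"
proof -
  have "inner_n n (nz n x) (nz n x) \<le> 1" for x
  proof (cases "inner_n n x x > 0")
    case True then show ?thesis using nz_sphere[OF True] by (simp add: sphere_n_def)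
  next
    case False
    then have "inner_n n x x = 0" using inner_n_nonneg[of n x] by simp
    then show ?thesis by (simp add: inner_nz inner_n_sym[of n x "nz n x"])
  qed
  then show ?thesis unfolding unif_sphere_nz
    by (subst AE_distr_iff) (auto intro!: AE_I2)
qed

lemma pow_le_S: assumes "overlap p n \<theta>0 \<theta> \<le> s" "0 \<le> s"
  shows "(inner_n n \<theta> \<theta>0)^p \<le> s^p"
proof (cases "even p")
  case True
  then have "\<bar>inner_n n \<theta> \<theta>0\<bar> \<le> s" using assms by (simp add: overlap_def)
  then have "\<bar>inner_n n \<theta> \<theta>0\<bar>^p \<le> s^p" by (rule power_mono) simp
  then show ?thesis using True by (simp add: power_even_abs)
next
  case False
  then have m: "inner_n n \<theta> \<theta>0 \<le> s" using assms by (simp add: overlap_def)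
  show ?thesis
  proof (cases "inner_n n \<theta> \<theta>0 \<ge> 0")
    case True then show ?thesis using m by (intro power_mono) auto
  next
    case neg: False
    then have "(inner_n n \<theta> \<theta>0)^p < 0" using False by (simp add: odd_pos power_less_zero_eq)
    then show ?thesis using assms(2) by (smt (verit) zero_le_power)
  qed
qed

lemma pow_ge_T: assumes "overlap p n \<theta>0 \<theta> > t" "0 \<le> t"
  shows "(inner_n n \<theta> \<theta>0)^p \<ge> t^p"
proof (cases "even p")
  case True
  then have "\<bar>inner_n n \<theta> \<theta>0\<bar> \<ge> t" using assms by (simp add: overlap_def)
  then have "\<bar>inner_n n \<theta> \<theta>0\<bar>^p \<ge> t^p" by (intro power_mono) (use assms in auto)
  then show ?thesis using True by (simp add: power_even_abs)
next
  case False
  then have m: "inner_n n \<theta> \<theta>0 \<ge> t" using assms by (simp add: overlap_def)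
  then show ?thesis using assms by (intro power_mono) auto
qed

lemma exists_orth:
  assumes n: "n \<ge> 2" and t0: "\<theta>0 \<in> sphere_n n"
  shows "\<exists>w \<in> sphere_n n. inner_n n w \<theta>0 = 0"
proof -
  have "\<exists>a<n. \<theta>0 a \<noteq> 0"
  proof (rule ccontr)
    assume "\<not> ?thesis"
    then have "inner_n n \<theta>0 \<theta>0 = 0" by (simp add: inner_n_def)
    then show False using t0 by (simp add: sphere_n_def)
  qed
  then obtain a where a: "a < n" "\<theta>0 a \<noteq> 0" by auto
  define b where "b = (if a = 0 then 1 else 0::nat)"
  have b: "b < n" "b \<noteq> a" using n by (auto simp: b_def)
  define w0 where "w0 i = (if i = a then \<theta>0 b else if i = b then - \<theta>0 a else 0)" for i
  have e1: "w0 i * \<theta>0 i = (if i = a then \<theta>0 b * \<theta>0 a else 0) + (if i = b then - \<theta>0 a * \<theta>0 b else 0)" for i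
    using b by (auto simp: w0_def)
  have e2: "w0 i * w0 i = (if i = a then \<theta>0 b * \<theta>0 b else 0) + (if i = b then \<theta>0 a * \<theta>0 a else 0)" for i
    using b by (auto simp: w0_def)
  have o: "inner_n n w0 \<theta>0 = 0"
    unfolding inner_n_def e1 sum.distrib using a b by simp
  have "\<theta>0 a * \<theta>0 a > 0" using a(2) by (simp add: zero_less_mult_iff linorder_neq_iff) blast
  moreover have "\<theta>0 b * \<theta>0 b \<ge> 0" by simp
  moreover have "inner_n n w0 w0 = \<theta>0 b * \<theta>0 b + \<theta>0 a * \<theta>0 a"
    unfolding inner_n_def e2 sum.distrib using a b by simp
  ultimately have q: "inner_n n w0 w0 > 0" by linarith
  show ?thesis
    by (rule bexI[of _ "nz n w0"]) (use o q in \<open>simp_all add: inner_nz nz_sphere\<close>)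
qed

lemma overlap_meas[measurable]: "(\<lambda>x. overlap p n \<theta>0 x) \<in> borel_measurable (Rn n)"
  unfolding overlap_def by (cases "even p") simp_all

lemma setS_sets[measurable]: "setS p n \<theta>0 s \<in> sets (Rn n)"
proof -
  have "setS p n \<theta>0 s = {x \<in> space (Rn n). inner_n n x x = 1 \<and> overlap p n \<theta>0 x \<le> s}"
    by (auto simp: setS_def sphere_n_def space_Rn)
  also have "\<dots> \<in> sets (Rn n)" by measurable
  finally show ?thesis .
qed

lemma setT_sets[measurable]: "setT p n \<theta>0 t \<in> sets (Rn n)"
proof -
  have "setT p n \<theta>0 t = {x \<in> space (Rn n). inner_n n x x = 1 \<and> overlap p n \<theta>0 x > t}"
    by (auto simp: setT_def sphere_n_def space_Rn)
  also have "\<dots> \<in> sets (Rn n)" by measurable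
  finally show ?thesis .
qed

lemma post_bound:
  assumes n: "n \<ge> 2" and p: "p \<ge> 1" and t0: "\<theta>0 \<in> sphere_n n" and lam: "lam \<ge> 0"
    and s: "0 < s" "s < t" "t < 1"
    and Lb: "Lsup p n Zt \<le> Cst * sqrt (real n)"
  shows "1 / real n * ln (posterior p n lam (obsY p n lam \<theta>0 Zt) (setS p n \<theta>0 s) /
           posterior p n lam (obsY p n lam \<theta>0 Zt) (setT p n \<theta>0 t))
         \<le> 1/2 * lam\<^sup>2 * (s^p - t^p) + lam * Cst + ln (4 / (1 - t))"
proof -
  have n1: "n \<ge> 1" using n by simp
  interpret Pi: prob_space "unif_sphere n" by (rule unif_prob[OF n1])
  define f where "f = fpost p n lam (obsY p n lam \<theta>0 Zt)"
  define L where "L = Lsup p n Zt"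
  define sn where "sn = sqrt (real n)"
  have sn0: "sn > 0" using n1 by (simp add: sn_def)
  have snsn: "sn * sn = real n" by (simp add: sn_def)
  have L0: "L \<ge> 0" using Lsup_nonneg[OF n1] by (simp add: L_def)
  have feq: "f \<theta> = exp (1/2 * real n * lam\<^sup>2 * (inner_n n \<theta> \<theta>0)^p + 1/2 * sn * lam * mlf p n Zt (\<lambda>_. \<theta>))" for \<theta>
    by (simp add: f_def fpost_eq sn_def)
  have fpos: "f \<theta> > 0" for \<theta> by (simp add: feq)
  have [measurable]: "f \<in> borel_measurable (unif_sphere n)" unfolding f_def by measurable
  have lamsn: "0 \<le> 1/2 * sn * lam" using sn0 lam by simp
  have Wle: "mlf p n Zt (\<lambda>_. \<theta>) \<le> L" "- L \<le> mlf p n Zt (\<lambda>_. \<theta>)" if "inner_n n \<theta> \<theta> \<le> 1" for \<theta>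
    using W_bound[OF n1 that, of p Zt] by (auto simp: L_def)
  have mp1: "\<bar>(inner_n n \<theta> \<theta>0)^p\<bar> \<le> 1" if "inner_n n \<theta> \<theta> \<le> 1" for \<theta>
    using m_bound[OF that t0] by (simp add: power_abs power_le_one)
  define Fmax where "Fmax = exp (1/2 * real n * lam\<^sup>2 + 1/2 * sn * lam * L)"
  have fle: "f \<theta> \<le> Fmax" if th: "inner_n n \<theta> \<theta> \<le> 1" for \<theta>
  proof -
    have "1/2 * real n * lam\<^sup>2 * (inner_n n \<theta> \<theta>0)^p \<le> 1/2 * real n * lam\<^sup>2"
      using mp1[OF th] by (intro mult_left_le) auto
    moreover have "1/2 * sn * lam * mlf p n Zt (\<lambda>_. \<theta>) \<le> 1/2 * sn * lam * L"
      using Wle(1)[OF th] lamsn by (rule mult_left_mono)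
    ultimately show ?thesis unfolding feq Fmax_def by simp
  qed
  have intA: "integrable (unif_sphere n) (\<lambda>\<theta>. indicator A \<theta> * f \<theta>)" if A: "A \<in> sets (Rn n)" for A
  proof (rule Pi.integrable_const_bound[where B=Fmax])
    show "AE x in unif_sphere n. norm (indicator A x * f x) \<le> Fmax"
      using AE_unif_ball
    proof eventually_elim
      case (elim x) then show ?case using fle[of x] fpos[of x] by (auto simp: indicator_def)
    qed
    show "(\<lambda>\<theta>. indicator A \<theta> * f \<theta>) \<in> borel_measurable (unif_sphere n)" using A by measurable
  qed
  have intf: "integrable (unif_sphere n) f"
  proof (rule Pi.integrable_const_bound[where B=Fmax])
    show "AE x in unif_sphere n. norm (f x) \<le> Fmax"
      using AE_unif_ball
    proof eventually_elim
      case (elim x) then show ?case using fle[of x] fpos[of x] by auto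
    qed
  qed simp
  define N where "N = (LINT \<theta>|unif_sphere n. indicator (setS p n \<theta>0 s) \<theta> * f \<theta>)"
  define Tt where "Tt = (LINT \<theta>|unif_sphere n. indicator (setT p n \<theta>0 t) \<theta> * f \<theta>)"
  define D where "D = (LINT \<theta>|unif_sphere n. f \<theta>)"
  define U where "U = exp (1/2 * real n * lam\<^sup>2 * s^p + 1/2 * sn * lam * L)"
  define Lo where "Lo = exp (1/2 * real n * lam\<^sup>2 * t^p - 1/2 * sn * lam * L)"
  define cmin where "cmin = exp (- (1/2 * real n * lam\<^sup>2) - 1/2 * sn * lam * L)"
  have sph1: "inner_n n \<theta> \<theta> = 1" if "\<theta> \<in> sphere_n n" for \<theta> using that by (simp add: sphere_n_def)
  have fS: "f \<theta> \<le> U" "cmin \<le> f \<theta>" if th: "\<theta> \<in> setS p n \<theta>0 s" for \<theta>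
  proof -
    have sp: "\<theta> \<in> sphere_n n" "overlap p n \<theta>0 \<theta> \<le> s" using th by (auto simp: setS_def)
    have "1/2 * real n * lam\<^sup>2 * (inner_n n \<theta> \<theta>0)^p \<le> 1/2 * real n * lam\<^sup>2 * s^p"
      using pow_le_S[OF sp(2)] s by (intro mult_left_mono) auto
    moreover have "1/2 * sn * lam * mlf p n Zt (\<lambda>_. \<theta>) \<le> 1/2 * sn * lam * L"
      using Wle(1)[of \<theta>] sph1[OF sp(1)] lamsn by (intro mult_left_mono) auto
    ultimately show "f \<theta> \<le> U" unfolding feq U_def by simp
    have c0: "0 \<le> 1/2 * real n * lam\<^sup>2" by simp
    have "-1 \<le> (inner_n n \<theta> \<theta>0)^p" using mp1[of \<theta>] sph1[OF sp(1)] by (simp add: abs_le_iff)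
    then have "(1/2 * real n * lam\<^sup>2) * (-1) \<le> (1/2 * real n * lam\<^sup>2) * (inner_n n \<theta> \<theta>0)^p"
      using c0 by (rule mult_left_mono)
    then have "- (1/2 * real n * lam\<^sup>2) \<le> 1/2 * real n * lam\<^sup>2 * (inner_n n \<theta> \<theta>0)^p" by simp
    moreover have "- (1/2 * sn * lam * L) \<le> 1/2 * sn * lam * mlf p n Zt (\<lambda>_. \<theta>)"
      using Wle(2)[of \<theta>] sph1[OF sp(1)] lamsn mult_left_mono by fastforce
    ultimately show "cmin \<le> f \<theta>" unfolding feq cmin_def by simp
  qed
  have fT: "Lo \<le> f \<theta>" if th: "\<theta> \<in> setT p n \<theta>0 t" for \<theta>
  proof -
    have sp: "\<theta> \<in> sphere_n n" "overlap p n \<theta>0 \<theta> > t" using th by (auto simp: setT_def)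
    have "1/2 * real n * lam\<^sup>2 * t^p \<le> 1/2 * real n * lam\<^sup>2 * (inner_n n \<theta> \<theta>0)^p"
      using pow_ge_T[OF sp(2)] s by (intro mult_left_mono) auto
    moreover have "- (1/2 * sn * lam * L) \<le> 1/2 * sn * lam * mlf p n Zt (\<lambda>_. \<theta>)"
      using Wle(2)[of \<theta>] sph1[OF sp(1)] lamsn mult_left_mono by fastforce
    ultimately show ?thesis unfolding feq Lo_def by simp
  qed
  have int_ind_const: "(LINT \<theta>|unif_sphere n. c * indicator A \<theta>) = c * measure (unif_sphere n) A"
    if "A \<in> sets (Rn n)" for c A using that by simp
  have NU: "N \<le> U"
  proof -
    have "N \<le> (LINT \<theta>|unif_sphere n. U)"
      unfolding N_def
    proof (rule integral_mono)
      show "integrable (unif_sphere n) (\<lambda>\<theta>. indicator (setS p n \<theta>0 s) \<theta> * f \<theta>)" by (rule intA) simp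
      show "integrable (unif_sphere n) (\<lambda>\<theta>. U)" by simp
      fix \<theta> show "indicator (setS p n \<theta>0 s) \<theta> * f \<theta> \<le> U"
        using fS(1)[of \<theta>] by (cases "\<theta> \<in> setS p n \<theta>0 s") (auto simp: U_def)
    qed
    then show ?thesis using Pi.prob_space by simp
  qed
  obtain w where w: "w \<in> sphere_n n" "inner_n n w \<theta>0 = 0" using exists_orth[OF n t0] by blast
  define r1 where "r1 = s\<^sup>2 / 8"
  have r1: "0 < r1" "r1 \<le> 1/4" using s by (auto simp: r1_def power2_eq_square) (smt (verit) mult_le_one)
  have capS: "capset n r1 w \<subseteq> setS p n \<theta>0 s"
  proof
    fix \<theta> assume th: "\<theta> \<in> capset n r1 w"
    then have sp: "\<theta> \<in> sphere_n n" "inner_n n \<theta> w > 1 - 4 * r1" by (auto simp: capset_def)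
    have "(nrm n (\<lambda>i. \<theta> i - w i))\<^sup>2 < s\<^sup>2"
      using nrm_diff_sphere[OF sp(1) w(1)] sp(2) by (simp add: r1_def)
    then have d: "nrm n (\<lambda>i. \<theta> i - w i) < s" using s by (smt (verit) nrm_nonneg power_mono)
    have "inner_n n \<theta> \<theta>0 = inner_n n (\<lambda>i. \<theta> i - w i) \<theta>0" by (simp add: inner_n_diff_left w(2))
    then have "\<bar>inner_n n \<theta> \<theta>0\<bar> \<le> nrm n (\<lambda>i. \<theta> i - w i)"
      using inner_n_CS[of n "\<lambda>i. \<theta> i - w i" \<theta>0] nrm_sphere[OF t0] by simp
    then have "\<bar>inner_n n \<theta> \<theta>0\<bar> \<le> s" using d by simp
    then have "overlap p n \<theta>0 \<theta> \<le> s" by (auto simp: overlap_def)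
    then show "\<theta> \<in> setS p n \<theta>0 s" using sp by (simp add: setS_def)
  qed
  have mS: "measure (unif_sphere n) (capset n r1 w) \<ge> r1^n"
    using cap_pos[OF n1 w(1) r1] by (simp add: capset_def Pi.emeasure_eq_measure)
  have NL: "N \<ge> cmin * r1^n"
  proof -
    have "cmin * r1^n \<le> cmin * measure (unif_sphere n) (capset n r1 w)"
      using mS by (simp add: cmin_def)
    also have "\<dots> = (LINT \<theta>|unif_sphere n. cmin * indicator (capset n r1 w) \<theta>)"
      by (simp add: capset_def)
    also have "\<dots> \<le> N"
      unfolding N_def
    proof (rule integral_mono)
      show "integrable (unif_sphere n) (\<lambda>\<theta>. indicator (setS p n \<theta>0 s) \<theta> * f \<theta>)" by (rule intA) simp
      show "integrable (unif_sphere n) (\<lambda>\<theta>. cmin * indicator (capset n r1 w) \<theta>)"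
        by (intro integrable_mult_right integrable_real_indicator) (auto simp: capset_def Pi.emeasure_eq_measure)
      fix \<theta> show "cmin * indicator (capset n r1 w) \<theta> \<le> indicator (setS p n \<theta>0 s) \<theta> * f \<theta>"
        using fS(2)[of \<theta>] capS fpos[of \<theta>] by (auto simp: indicator_def cmin_def)
    qed
    finally show ?thesis .
  qed
  have Npos: "N > 0" using NL r1 by (smt (verit) cmin_def exp_gt_zero mult_pos_pos zero_less_power)
  define rho where "rho = (1 - t) / 4"
  have rho: "0 < rho" "rho \<le> 1/4" using s by (auto simp: rho_def)
  have capT: "capset n rho \<theta>0 \<subseteq> setT p n \<theta>0 t"
  proof
    fix \<theta> assume "\<theta> \<in> capset n rho \<theta>0"
    moreover have "1 - 4 * rho = t" by (simp add: rho_def field_simps)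
    ultimately have sp: "\<theta> \<in> sphere_n n" "inner_n n \<theta> \<theta>0 > t" by (auto simp: capset_def)
    then have "overlap p n \<theta>0 \<theta> > t" by (auto simp: overlap_def)
    then show "\<theta> \<in> setT p n \<theta>0 t" using sp by (simp add: setT_def)
  qed
  have mT: "measure (unif_sphere n) (capset n rho \<theta>0) \<ge> rho^n"
    using cap_pos[OF n1 t0 rho] by (simp add: capset_def Pi.emeasure_eq_measure)
  have TL: "Tt \<ge> Lo * rho^n"
  proof -
    have "Lo * rho^n \<le> Lo * measure (unif_sphere n) (capset n rho \<theta>0)"
      using mT by (simp add: Lo_def)
    also have "\<dots> = (LINT \<theta>|unif_sphere n. Lo * indicator (capset n rho \<theta>0) \<theta>)"
      by (simp add: capset_def)
    also have "\<dots> \<le> Tt"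
      unfolding Tt_def
    proof (rule integral_mono)
      show "integrable (unif_sphere n) (\<lambda>\<theta>. indicator (setT p n \<theta>0 t) \<theta> * f \<theta>)" by (rule intA) simp
      show "integrable (unif_sphere n) (\<lambda>\<theta>. Lo * indicator (capset n rho \<theta>0) \<theta>)"
        by (intro integrable_mult_right integrable_real_indicator) (auto simp: capset_def Pi.emeasure_eq_measure)
      fix \<theta> show "Lo * indicator (capset n rho \<theta>0) \<theta> \<le> indicator (setT p n \<theta>0 t) \<theta> * f \<theta>"
        using fT[of \<theta>] capT fpos[of \<theta>] by (auto simp: indicator_def Lo_def)
    qed
    finally show ?thesis .
  qed
  have LRpos: "Lo * rho^n > 0" using rho by (simp add: Lo_def)
  have Tpos: "Tt > 0" using TL LRpos by linarith
  have DT: "Tt \<le> D"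
    unfolding Tt_def D_def
  proof (rule integral_mono)
    show "integrable (unif_sphere n) (\<lambda>\<theta>. indicator (setT p n \<theta>0 t) \<theta> * f \<theta>)" by (rule intA) simp
    show "integrable (unif_sphere n) f" by (rule intf)
    fix \<theta> show "indicator (setT p n \<theta>0 t) \<theta> * f \<theta> \<le> f \<theta>"
      using fpos[of \<theta>] by (simp add: indicator_def)
  qed
  have Dpos: "D \<noteq> 0" using DT Tpos by linarith
  have ratio: "posterior p n lam (obsY p n lam \<theta>0 Zt) (setS p n \<theta>0 s) /
           posterior p n lam (obsY p n lam \<theta>0 Zt) (setT p n \<theta>0 t) = N / Tt"
    using Dpos by (simp add: posterior_fpost N_def Tt_def D_def f_def)
  have "N / Tt \<le> U / (Lo * rho^n)"
    using NU TL LRpos Npos by (intro frac_le) (auto simp: U_def)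
  then have "ln (N / Tt) \<le> ln (U / (Lo * rho^n))"
    using Npos Tpos LRpos by (subst ln_le_cancel_iff) (auto simp: U_def)
  also have "ln (U / (Lo * rho^n)) = ln U - ln Lo - real n * ln rho"
    using rho by (simp add: ln_div ln_mult ln_realpow U_def Lo_def)
  also have "\<dots> = real n * (1/2 * lam\<^sup>2 * (s^p - t^p)) + sn * lam * L - real n * ln rho"
    by (simp add: U_def Lo_def field_simps)
  finally have main: "ln (N / Tt) \<le> real n * (1/2 * lam\<^sup>2 * (s^p - t^p)) + sn * lam * L - real n * ln rho" .
  have "sn * lam * L \<le> sn * lam * (Cst * sn)"
    using Lb lam sn0 by (intro mult_left_mono) (auto simp: L_def sn_def)
  also have "\<dots> = real n * (lam * Cst)" using snsn by (simp add: algebra_simps)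
  finally have "ln (N / Tt) \<le> real n * (1/2 * lam\<^sup>2 * (s^p - t^p) + lam * Cst - ln rho)"
    using main by (simp add: algebra_simps)
  then have "1 / real n * ln (N / Tt) \<le> 1/2 * lam\<^sup>2 * (s^p - t^p) + lam * Cst - ln rho"
    using n1 by (simp add: field_simps)
  moreover have "- ln rho = ln (4 / (1 - t))"
    using s by (simp add: rho_def ln_div)
  ultimately show ?thesis using ratio by simp
qed

lemma final_arith:
  fixes Cst K y l :: real
  assumes C: "Cst \<ge> 0" and K: "K > 0" and y: "y \<ge> 16 * (Cst + 2 + K + \<bar>l\<bar>)"
  shows "- ((y\<^sup>2 - 1)\<^sup>2 / (4 * y)) + y\<^sup>2 * Cst + (l + ln y) \<le> - K"
proof -
  define Q where "Q = Cst + 2 + K + \<bar>l\<bar>"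
  have Q: "Q \<ge> 2" using C K by (simp add: Q_def)
  have y32: "y \<ge> 32" using y Q by (simp add: Q_def)
  have yQ: "y / 16 \<ge> Q" using y by (simp add: Q_def)
  have y2: "y\<^sup>2 \<ge> y" using y32 by (simp add: power2_eq_square)
  have y1: "y\<^sup>2 \<ge> 1" using y2 y32 by linarith
  have "y\<^sup>2 / 2 \<le> y\<^sup>2 - 1" using y1 y2 y32 by linarith
  then have "(y\<^sup>2 / 2)\<^sup>2 \<le> (y\<^sup>2 - 1)\<^sup>2" by (rule power_mono) (use y1 in simp)
  then have "(y\<^sup>2 / 2)\<^sup>2 / (4 * y) \<le> (y\<^sup>2 - 1)\<^sup>2 / (4 * y)" using y32 by (intro divide_right_mono) auto
  moreover have "(y\<^sup>2 / 2)\<^sup>2 / (4 * y) = y\<^sup>2 * (y / 16)" using y32 by (simp add: power2_eq_square field_simps)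
  moreover have "y\<^sup>2 * Q \<le> y\<^sup>2 * (y / 16)" using yQ by (intro mult_left_mono) auto
  ultimately have A: "y\<^sup>2 * Q \<le> (y\<^sup>2 - 1)\<^sup>2 / (4 * y)" by linarith
  have "ln y \<le> y" using ln_le_minus_one[of y] y32 by linarith
  moreover have "K \<le> K * y\<^sup>2" using K y1 by simp
  moreover have "\<bar>l\<bar> * 1 \<le> \<bar>l\<bar> * y\<^sup>2" using y1 by (intro mult_left_mono) auto
  then have "l \<le> \<bar>l\<bar> * y\<^sup>2" by linarith
  moreover have "y\<^sup>2 * Q = y\<^sup>2 * Cst + 2 * y\<^sup>2 + K * y\<^sup>2 + \<bar>l\<bar> * y\<^sup>2" by (simp add: Q_def algebra_simps)
  ultimately show ?thesis using A y2 y32 by linarith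
qed

definition epsl :: "real \<Rightarrow> real" where "epsl lam = 1 / sqrt (max lam 0 + 1)"

lemma epsl_pos: "0 < epsl lam" and epsl_le1: "epsl lam \<le> 1"
  by (auto simp: epsl_def)

lemma epsl_lim: "(epsl \<longlongrightarrow> 0) at_top"
proof -
  have "((\<lambda>x::real. 1 / sqrt (x + 1)) \<longlongrightarrow> 0) at_top" by real_asymp
  moreover have "eventually (\<lambda>x. 1 / sqrt (x + 1) = epsl x) at_top"
    using eventually_ge_at_top[of "0::real"] by eventually_elim (simp add: epsl_def)
  ultimately show ?thesis by (rule Lim_transform_eventually)
qed

lemma lam_bound:
  fixes p :: nat and Cst K lam :: real
  assumes p: "p \<ge> 1" and C: "Cst \<ge> 0" and K: "K > 0" and lam: "lam \<ge> 0"
    and y: "sqrt (lam + 1) \<ge> 16 * (Cst + 2 + K + \<bar>ln (8 * real p)\<bar>)"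
  shows "1/2 * lam\<^sup>2 * ((1 - epsl lam)^p - (1 - epsl lam / (2 * real p))^p) + lam * Cst
           + ln (4 / (1 - (1 - epsl lam / (2 * real p)))) \<le> - K"
proof -
  define yy where "yy = sqrt (lam + 1)"
  define e where "e = epsl lam"
  have yy1: "yy \<ge> 1" using lam by (simp add: yy_def)
  have e: "e = 1 / yy" using lam by (simp add: e_def epsl_def yy_def)
  have e0: "0 < e" "e \<le> 1" by (auto simp: e_def epsl_pos epsl_le1)
  have lamy: "lam = yy\<^sup>2 - 1" using lam by (simp add: yy_def)
  have sp: "(1 - e)^p \<le> 1 - e" using power_decreasing[of 1 p "1 - e"] p e0 by simp
  have "1 + real p * (- (e / (2 * real p))) \<le> (1 + (- (e / (2 * real p))))^p"
    using e0 p by (intro Bernoulli_inequality) (auto simp: field_simps)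
  then have tp: "1 - e / 2 \<le> (1 - e / (2 * real p))^p" using p by simp
  have d: "(1 - e)^p - (1 - e / (2 * real p))^p \<le> - (e / 2)" using sp tp by linarith
  have "1/2 * lam\<^sup>2 * ((1 - e)^p - (1 - e / (2 * real p))^p) \<le> 1/2 * lam\<^sup>2 * (- (e / 2))"
    using d by (intro mult_left_mono) auto
  also have "\<dots> = - ((yy\<^sup>2 - 1)\<^sup>2 / (4 * yy))" using yy1 by (simp add: lamy e field_simps)
  finally have A: "1/2 * lam\<^sup>2 * ((1 - e)^p - (1 - e / (2 * real p))^p) \<le> - ((yy\<^sup>2 - 1)\<^sup>2 / (4 * yy))" .
  have B: "lam * Cst \<le> yy\<^sup>2 * Cst" using C lamy by (intro mult_right_mono) auto
  have "4 / (1 - (1 - e / (2 * real p))) = 8 * real p * yy" using p yy1 by (simp add: e field_simps)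
  then have Cc: "ln (4 / (1 - (1 - e / (2 * real p)))) = ln (8 * real p) + ln yy"
    using p yy1 by (simp add: ln_mult)
  have "- ((yy\<^sup>2 - 1)\<^sup>2 / (4 * yy)) + yy\<^sup>2 * Cst + (ln (8 * real p) + ln yy) \<le> - K"
    using y by (intro final_arith C K) (simp add: yy_def)
  then show ?thesis using A B Cc by (simp add: e_def)
qed

theorem proposition2p3:
  fixes p :: nat
    and \<theta>0 :: "nat \<Rightarrow> nat \<Rightarrow> real"
    and M :: "'a measure"
    and Z :: "nat \<Rightarrow> 'a \<Rightarrow> nat list \<Rightarrow> real"
  assumes p3: "p \<ge> 3"
    and theta0: "\<And>n. n \<ge> 1 \<Longrightarrow> \<theta>0 n \<in> sphere_n n"
    and prob: "prob_space M"
    and Zindep: "\<And>n. n \<ge> 1 \<Longrightarrow>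
        prob_space.indep_vars M (\<lambda>_. borel) (\<lambda>i \<omega>. Z n \<omega> i) (tidx p n)"
    and Zgauss: "\<And>n i. n \<ge> 1 \<Longrightarrow> i \<in> tidx p n \<Longrightarrow>
        distributed M lborel (\<lambda>\<omega>. Z n \<omega> i) (\<lambda>x. ennreal (std_normal_density x))"
  shows "\<forall>K>0. \<exists>lam0>0. \<exists>s t :: real \<Rightarrow> real.
     (\<forall>lam. 0 \<le> s lam \<and> s lam < t lam \<and> t lam < 1) \<and>
     (s \<longlongrightarrow> 1) at_top \<and> (t \<longlongrightarrow> 1) at_top \<and>
     (\<forall>lam\<ge>lam0. AE \<omega> in M.
        limsup (\<lambda>n. ereal (1 / real n * ln
          (posterior p n lam (obsY p n lam (\<theta>0 n) (Z n \<omega>)) (setS p n (\<theta>0 n) (s lam)) /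
           posterior p n lam (obsY p n lam (\<theta>0 n) (Z n \<omega>)) (setT p n (\<theta>0 n) (t lam)))))
        \<le> ereal (- K))"
proof (intro allI impI)
  fix K :: real assume K: "K > 0"
  have p1: "p \<ge> 1" using p3 by simp
  define Cst where "Cst = 2 * (1 + real p * ln (32 * (real p)\<^sup>2))"
  have "1 \<le> (real p)\<^sup>2" using p1 by simp
  then have "1 \<le> 32 * (real p)\<^sup>2" by linarith
  then have "0 \<le> ln (32 * (real p)\<^sup>2)" by simp
  then have C: "Cst \<ge> 0" by (simp add: Cst_def)
  define Y where "Y = 16 * (Cst + 2 + K + \<bar>ln (8 * real p)\<bar>)"
  have Y32: "Y \<ge> 32" using C K by (simp add: Y_def)
  define lam0 where "lam0 = Y\<^sup>2 - 1"
  have "32 * 32 \<le> Y * Y" using Y32 by (intro mult_mono) auto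
  then have Y2: "Y\<^sup>2 \<ge> 32 * 32" by (simp add: power2_eq_square)
  then have lam0: "lam0 > 0" by (simp add: lam0_def)
  define s where "s = (\<lambda>lam. 1 - epsl lam)"
  define t where "t = (\<lambda>lam. 1 - epsl lam / (2 * real p))"
  have st: "0 \<le> s lam \<and> s lam < t lam \<and> t lam < 1" for lam
  proof -
    have "epsl lam / (2 * real p) < epsl lam" using epsl_pos[of lam] p1 by (simp add: field_simps)
    moreover have "0 < epsl lam / (2 * real p)" using epsl_pos[of lam] p1 by simp
    ultimately show ?thesis using epsl_le1[of lam] by (simp add: s_def t_def)
  qed
  have slim: "(s \<longlongrightarrow> 1) at_top"
    unfolding s_def using tendsto_diff[OF tendsto_const epsl_lim, of 1] by simp
  have "((\<lambda>lam. epsl lam / (2 * real p)) \<longlongrightarrow> 0 / (2 * real p)) at_top"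
    using p1 by (intro tendsto_divide epsl_lim tendsto_const) simp
  then have "((\<lambda>lam. 1 - epsl lam / (2 * real p)) \<longlongrightarrow> 1 - 0 / (2 * real p)) at_top"
    by (intro tendsto_diff tendsto_const)
  then have tlim: "(t \<longlongrightarrow> 1) at_top" by (simp add: t_def)
  have AEL: "AE \<omega> in M. eventually (\<lambda>n. Lsup p n (Z n \<omega>) \<le> Cst * sqrt (real n)) sequentially"
    unfolding Cst_def by (rule AE_Lsup[OF prob p1 Zindep Zgauss])
  have main: "AE \<omega> in M.
        limsup (\<lambda>n. ereal (1 / real n * ln
          (posterior p n lam (obsY p n lam (\<theta>0 n) (Z n \<omega>)) (setS p n (\<theta>0 n) (s lam)) /
           posterior p n lam (obsY p n lam (\<theta>0 n) (Z n \<omega>)) (setT p n (\<theta>0 n) (t lam)))))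
        \<le> ereal (- K)" if lam: "lam \<ge> lam0" for lam
  proof -
    have lam_pos: "lam > 0" using lam lam0 by simp
    have "Y\<^sup>2 \<le> lam + 1" using lam by (simp add: lam0_def)
    then have "sqrt (Y\<^sup>2) \<le> sqrt (lam + 1)" by (rule real_sqrt_le_mono)
    then have yb: "sqrt (lam + 1) \<ge> 16 * (Cst + 2 + K + \<bar>ln (8 * real p)\<bar>)" using Y32 by (simp add: Y_def)
    have bound: "1/2 * lam\<^sup>2 * ((s lam)^p - (t lam)^p) + lam * Cst + ln (4 / (1 - t lam)) \<le> - K"
      using lam_bound[OF p1 C K less_imp_le[OF lam_pos] yb] by (simp add: s_def t_def)
    have spos: "0 < s lam"
    proof -
      have "1 < sqrt (max lam 0 + 1)" using lam_pos by simp
      then show ?thesis by (simp add: s_def epsl_def)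
    qed
    show ?thesis using AEL
    proof (rule AE_mp, intro AE_I2 impI)
      fix \<omega> assume ev: "eventually (\<lambda>n. Lsup p n (Z n \<omega>) \<le> Cst * sqrt (real n)) sequentially"
      show "limsup (\<lambda>n. ereal (1 / real n * ln
          (posterior p n lam (obsY p n lam (\<theta>0 n) (Z n \<omega>)) (setS p n (\<theta>0 n) (s lam)) /
           posterior p n lam (obsY p n lam (\<theta>0 n) (Z n \<omega>)) (setT p n (\<theta>0 n) (t lam)))))
        \<le> ereal (- K)"
      proof (rule Limsup_bounded)
        show "eventually (\<lambda>n. ereal (1 / real n * ln
          (posterior p n lam (obsY p n lam (\<theta>0 n) (Z n \<omega>)) (setS p n (\<theta>0 n) (s lam)) /
           posterior p n lam (obsY p n lam (\<theta>0 n) (Z n \<omega>)) (setT p n (\<theta>0 n) (t lam))))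
          \<le> ereal (- K)) sequentially"
          using ev eventually_ge_at_top[of 2]
        proof eventually_elim
          case (elim n)
          have "1 / real n * ln
              (posterior p n lam (obsY p n lam (\<theta>0 n) (Z n \<omega>)) (setS p n (\<theta>0 n) (s lam)) /
               posterior p n lam (obsY p n lam (\<theta>0 n) (Z n \<omega>)) (setT p n (\<theta>0 n) (t lam)))
            \<le> 1/2 * lam\<^sup>2 * ((s lam)^p - (t lam)^p) + lam * Cst + ln (4 / (1 - t lam))"
            using elim st[of lam] spos
            by (intro post_bound[OF _ p1 theta0 less_imp_le[OF lam_pos]]) auto
          also have "\<dots> \<le> - K" by (rule bound)
          finally show ?case by simp
        qed
      qed
    qed
  qed
  show "\<exists>lam0>0. \<exists>s t :: real \<Rightarrow> real.
     (\<forall>lam. 0 \<le> s lam \<and> s lam < t lam \<and> t lam < 1) \<and>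
     (s \<longlongrightarrow> 1) at_top \<and> (t \<longlongrightarrow> 1) at_top \<and>
     (\<forall>lam\<ge>lam0. AE \<omega> in M.
        limsup (\<lambda>n. ereal (1 / real n * ln
          (posterior p n lam (obsY p n lam (\<theta>0 n) (Z n \<omega>)) (setS p n (\<theta>0 n) (s lam)) /
           posterior p n lam (obsY p n lam (\<theta>0 n) (Z n \<omega>)) (setT p n (\<theta>0 n) (t lam)))))
        \<le> ereal (- K))"
    using lam0 st slim tlim main by blast
qed

end
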